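(* Let $(\Sigma_A^+,d,\sigma)$ be a subshift of finite type generated by a $k\times k$ incidence matrix $A$. Then for every $\alpha\ge0$: (1) for every $E\subset\Sigma_A^+$, $\dim_H(E,d)=\dfrac{h^{\alpha,B}_{top}(\sigma,E)}{1+\alpha}$, where $\dim_H(E,d)$ is the Hausdorff dimension of $E$ with respect to $d$; (2) $h^{\alpha,B}_{top}(\sigma,\Sigma_A^+)=h^\alpha_{top}(\sigma,\Sigma_A^+)=(1+\alpha)\log r(A)$, where $r(A)$ is the spectral radius of $A$. Consequently $\dim_H(\Sigma_A^+,d)=\log r(A)$.
   Context: $\Sigma_k^+=\{0,\dots,k-1\}^{\mathbb N}$ (coordinates $x=(x_0,x_1,\dots)$) with metric $d(x,y)=e^{-n(x,y)}$, where $n(x,y)$ is the first index at which $x$ and $y$ disagree ($n(x,x)=\infty$); $\sigma$ is the left shift. $A$ is a $k\times k$ matrix with entries in $\{0,1\}$, each row containing at least one $1$, and $\Sigma_A^+=\{x\in\Sigma_k^+: A_{x_n,x_{n+1}}=1\ \forall n\}$ with $\sigma$ restricted to it. For a TDS $(X,d,f)$ (compact metric space, continuous map), $d_n^\alpha(x,y)=\max_{0\le i\le n-1}e^{\alpha i}d(f^ix,f^iy)$, $B_n^\alpha(x,\varepsilon)=\{y: d_n^\alpha(x,y)<\varepsilon\}$. $\alpha$-Bowen topological entropy of $K\subset X$: $M^\alpha(K,s,\varepsilon,n)=\inf\sum_i e^{-sn_i}$ over finite or countable families $\{B^\alpha_{n_i}(x_i,\varepsilon)\}$ with $n_i\ge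 n$ covering $K$; $M^\alpha(K,s,\varepsilon)=\lim_n M^\alpha(K,s,\varepsilon,n)$; $M^\alpha(K,\varepsilon)=\inf\{s: M^\alpha(K,s,\varepsilon)=0\}$; $h^{\alpha,B}_{top}(f,K)=\lim_{\varepsilon\to0}M^\alpha(K,\varepsilon)$. $\alpha$-topological entropy: a set $E\subset X$ is $(n,\alpha,\varepsilon)$-spanning if every $x\in X$ has $y\in E$ with $d_n^\alpha(x,y)<\varepsilon$; $r_n(f,\alpha,X,\varepsilon)$ is the minimal cardinality of such a set; $h^\alpha_{top}(f,X)=\lim_{\varepsilon\to0}\limsup_{n\to\infty}\frac1n\log r_n(f,\alpha,X,\varepsilon)$. *)

theory Defs
  imports "Jordan_Normal_Form.Spectral_Radius"
          "HOL-Library.Extended_Real"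
          "HOL-Library.Extended_Nonnegative_Real"
          "HOL-Library.Liminf_Limsup"
begin

type_synonym seq = "nat \<Rightarrow> nat"

definition full_shift :: "nat \<Rightarrow> seq set" where
  "full_shift k = {x. \<forall>n. x n < k}"

definition SFT :: "nat \<Rightarrow> nat mat \<Rightarrow> seq set" where
  "SFT k A = {x \<in> full_shift k. \<forall>n. A $$ (x n, x (Suc n)) = 1}"

definition shift :: "seq \<Rightarrow> seq" where
  "shift x = (\<lambda>j. x (Suc j))"

definition sdist :: "seq \<Rightarrow> seq \<Rightarrow> real" where
  "sdist x y = (if x = y then 0 else exp (- real (LEAST n. x n \<noteq> y n)))"

text \<open>alpha-Bowen metric; for n = 0 the (empty) maximum is taken to be 0.\<close>
definition bowen_dist :: "real \<Rightarrow> nat \<Rightarrow> seq \<Rightarrow> seq \<Rightarrow> real" where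
  "bowen_dist \<alpha> n x y =
     Max (insert 0 ((\<lambda>i. exp (\<alpha> * real i) * sdist ((shift ^^ i) x) ((shift ^^ i) y)) ` {..<n}))"

definition bowen_ball :: "seq set \<Rightarrow> real \<Rightarrow> nat \<Rightarrow> seq \<Rightarrow> real \<Rightarrow> seq set" where
  "bowen_ball X \<alpha> n x \<epsilon> = {y \<in> X. bowen_dist \<alpha> n x y < \<epsilon>}"

text \<open>M^alpha(K,s,eps,N): infimum over finite or countable families of Bowen balls
  (indexed by a set I of naturals, centres in X) with n_i >= N covering K.\<close>
definition bowenM_N :: "seq set \<Rightarrow> real \<Rightarrow> seq set \<Rightarrow> real \<Rightarrow> real \<Rightarrow> nat \<Rightarrow> ennreal" where
  "bowenM_N X \<alpha> K s \<epsilon> N =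
     (INF (I, c, m) \<in> {(I, c, m). (\<forall>i\<in>I. c i \<in> X \<and> m i \<ge> N) \<and>
                          K \<subseteq> (\<Union>i\<in>I. bowen_ball X \<alpha> (m i) (c i) \<epsilon>)}.
        (\<Sum>i. if i \<in> I then ennreal (exp (- s * real (m i))) else 0))"

definition bowenM :: "seq set \<Rightarrow> real \<Rightarrow> seq set \<Rightarrow> real \<Rightarrow> real \<Rightarrow> ennreal" where
  "bowenM X \<alpha> K s \<epsilon> = lim (\<lambda>N. bowenM_N X \<alpha> K s \<epsilon> N)"

text \<open>Critical value; s ranges over nonnegative reals (value \<infinity> if no such s).\<close>
definition bowen_crit :: "seq set \<Rightarrow> real \<Rightarrow> seq set \<Rightarrow> real \<Rightarrow> ereal" where
  "bowen_crit X \<alpha> K \<epsilon> = Inf {ereal s | s. 0 \<le> s \<and> bowenM X \<alpha> K s \<epsilon> = 0}"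

definition bowen_entropy :: "seq set \<Rightarrow> real \<Rightarrow> seq set \<Rightarrow> ereal" where
  "bowen_entropy X \<alpha> K = Lim (at_right 0) (\<lambda>\<epsilon>. bowen_crit X \<alpha> K \<epsilon>)"

definition spanning :: "seq set \<Rightarrow> real \<Rightarrow> nat \<Rightarrow> real \<Rightarrow> seq set \<Rightarrow> bool" where
  "spanning X \<alpha> n \<epsilon> E \<longleftrightarrow> E \<subseteq> X \<and> (\<forall>x\<in>X. \<exists>y\<in>E. bowen_dist \<alpha> n x y < \<epsilon>)"

definition span_num :: "seq set \<Rightarrow> real \<Rightarrow> nat \<Rightarrow> real \<Rightarrow> nat" where
  "span_num X \<alpha> n \<epsilon> = Inf {card E | E. finite E \<and> spanning X \<alpha> n \<epsilon> E}"

definition alpha_entropy :: "seq set \<Rightarrow> real \<Rightarrow> ereal" where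
  "alpha_entropy X \<alpha> = Lim (at_right 0)
     (\<lambda>\<epsilon>. limsup (\<lambda>n. ereal (ln (real (span_num X \<alpha> n \<epsilon>)) / real n)))"

definition sdiam :: "seq set \<Rightarrow> real" where
  "sdiam U = (if U = {} then 0 else Sup {sdist x y | x y. x \<in> U \<and> y \<in> U})"

definition hausdorff_pre :: "real \<Rightarrow> real \<Rightarrow> seq set \<Rightarrow> ennreal" where
  "hausdorff_pre s \<delta> E =
     (INF U \<in> {U :: nat \<Rightarrow> seq set. E \<subseteq> (\<Union>i. U i) \<and> (\<forall>i. sdiam (U i) \<le> \<delta>)}.
        (\<Sum>i. ennreal (sdiam (U i) powr s)))"

definition hausdorff_measure :: "real \<Rightarrow> seq set \<Rightarrow> ennreal" where
  "hausdorff_measure s E = Lim (at_right 0) (\<lambda>\<delta>. hausdorff_pre s \<delta> E)"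

definition hausdorff_dim :: "seq set \<Rightarrow> ereal" where
  "hausdorff_dim E = Inf {ereal s | s. 0 < s \<and> hausdorff_measure s E = 0}"

end

theory Submission
  imports Defs "HOL-Real_Asymp.Real_Asymp"
begin


definition cyl :: "seq \<Rightarrow> nat \<Rightarrow> seq set" where
  "cyl c L = {y. \<forall>j<L. y j = c j}"

lemma shift_pow: "(shift ^^ i) x = (\<lambda>j. x (i + j))"
  by (induction i arbitrary: x) (auto simp: shift_def)

lemma sdist_eq_0_iff: "sdist x y = 0 \<longleftrightarrow> x = y"
  by (simp add: sdist_def)

lemma sdist_nonneg: "sdist x y \<ge> 0"
  by (simp add: sdist_def)

lemma sdist_le_1: "sdist x y \<le> 1"
  by (simp add: sdist_def)

lemma sdist_sym: "sdist x y = sdist y x"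
  unfolding sdist_def by (auto simp: eq_commute)

lemma sdist_less_exp: "sdist x y < exp (- a) \<longleftrightarrow> (\<forall>j. real j \<le> a \<longrightarrow> x j = y j)"
proof (cases "x = y")
  case True then show ?thesis by (simp add: sdist_def)
next
  case False
  then obtain n where n: "x n \<noteq> y n" by auto
  define p where "p = (LEAST n. x n \<noteq> y n)"
  have p1: "x p \<noteq> y p" unfolding p_def by (rule LeastI[of _ n]) (rule n)
  have p2: "\<And>j. j < p \<Longrightarrow> x j = y j" unfolding p_def using not_less_Least by blast
  have "sdist x y = exp (- real p)" using False by (simp add: sdist_def p_def)
  then have "sdist x y < exp (- a) \<longleftrightarrow> a < real p" by simp
  also have "\<dots> \<longleftrightarrow> (\<forall>j. real j \<le> a \<longrightarrow> x j = y j)"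
  proof
    assume "a < real p" then show "\<forall>j. real j \<le> a \<longrightarrow> x j = y j"
      using p2 by auto
  next
    assume "\<forall>j. real j \<le> a \<longrightarrow> x j = y j"
    then show "a < real p" using p1 by (meson not_le)
  qed
  finally show ?thesis .
qed

lemma sdist_le_exp: "sdist x y \<le> exp (- real p) \<longleftrightarrow> (\<forall>j<p. x j = y j)"
proof (cases "x = y")
  case True then show ?thesis by (simp add: sdist_def)
next
  case False
  then obtain n where n: "x n \<noteq> y n" by auto
  define q where "q = (LEAST n. x n \<noteq> y n)"
  have p1: "x q \<noteq> y q" unfolding q_def by (rule LeastI[of _ n]) (rule n)
  have p2: "\<And>j. j < q \<Longrightarrow> x j = y j" unfolding q_def using not_less_Least by blast
  have "sdist x y = exp (- real q)" using False by (simp add: sdist_def q_def)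
  then have "sdist x y \<le> exp (- real p) \<longleftrightarrow> p \<le> q" by simp
  also have "\<dots> \<longleftrightarrow> (\<forall>j<p. x j = y j)"
    using p1 p2 by (meson le_less_trans not_le)
  finally show ?thesis .
qed

lemma bowen_dist_less:
  assumes "\<epsilon> > 0"
  shows "bowen_dist \<alpha> n x y < \<epsilon> \<longleftrightarrow>
     (\<forall>i<n. \<forall>j. real j \<le> - ln \<epsilon> + \<alpha> * real i \<longrightarrow> x (i + j) = y (i + j))"
proof -
  have "bowen_dist \<alpha> n x y < \<epsilon> \<longleftrightarrow>
      (\<forall>i<n. exp (\<alpha> * real i) * sdist ((shift ^^ i) x) ((shift ^^ i) y) < \<epsilon>)"
    unfolding bowen_dist_def using assms by (subst Max_less_iff) auto
  also have "\<dots> \<longleftrightarrow> (\<forall>i<n. sdist ((shift ^^ i) x) ((shift ^^ i) y) < exp (- (- ln \<epsilon> + \<alpha> * real i)))"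
  proof -
    have "exp (\<alpha> * real i) * d < \<epsilon> \<longleftrightarrow> d < exp (- (- ln \<epsilon> + \<alpha> * real i))" for i d
    proof -
      have "exp (- (- ln \<epsilon> + \<alpha> * real i)) = \<epsilon> / exp (\<alpha> * real i)"
        using assms by (simp add: exp_diff exp_minus field_simps)
      then show ?thesis using pos_less_divide_eq[of "exp (\<alpha> * real i)" d \<epsilon>] by (simp add: mult.commute)
    qed
    then show ?thesis by auto
  qed
  also have "\<dots> \<longleftrightarrow> (\<forall>i<n. \<forall>j. real j \<le> - ln \<epsilon> + \<alpha> * real i \<longrightarrow> x (i + j) = y (i + j))"
    unfolding sdist_less_exp shift_pow by simp
  finally show ?thesis .
qed

definition ell :: "real \<Rightarrow> real \<Rightarrow> nat \<Rightarrow> nat" where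
  "ell \<alpha> \<epsilon> n = (if n = 0 then 0 else n + nat \<lfloor>- ln \<epsilon> + \<alpha> * real (n - 1)\<rfloor>)"

lemma ell_agree:
  assumes "0 < \<epsilon>" "\<epsilon> \<le> 1" "\<alpha> \<ge> 0"
  shows "(\<forall>i<n. \<forall>j. real j \<le> - ln \<epsilon> + \<alpha> * real i \<longrightarrow> x (i + j) = y (i + j))
     \<longleftrightarrow> (\<forall>q < ell \<alpha> \<epsilon> n. x q = y q)"
proof -
  have l0: "- ln \<epsilon> \<ge> 0" using assms by simp
  show ?thesis
  proof
    assume H: "\<forall>i<n. \<forall>j. real j \<le> - ln \<epsilon> + \<alpha> * real i \<longrightarrow> x (i + j) = y (i + j)"
    show "\<forall>q < ell \<alpha> \<epsilon> n. x q = y q"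
    proof (intro allI impI)
      fix q assume q: "q < ell \<alpha> \<epsilon> n"
      then have n: "n \<noteq> 0" by (auto simp: ell_def split: if_splits)
      show "x q = y q"
      proof (cases "q < n")
        case True
        have "\<alpha> * real q \<ge> 0" using assms(3) by simp
        then have "real 0 \<le> - ln \<epsilon> + \<alpha> * real q" using l0 by simp
        from H[rule_format, OF True this] show ?thesis by simp
      next
        case False
        define j where "j = q - (n - 1)"
        define a where "a = - ln \<epsilon> + \<alpha> * real (n - 1)"
        have "\<alpha> * real (n - 1) \<ge> 0" using assms(3) by simp
        then have a0: "a \<ge> 0" using l0 unfolding a_def by simp
        have qj: "q = (n - 1) + j" using False n unfolding j_def by simp
        have "j < Suc (nat \<lfloor>a\<rfloor>)"
          using q n False unfolding j_def ell_def a_def by simp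
        then have "j \<le> nat \<lfloor>a\<rfloor>" by simp
        then have "real j \<le> real (nat \<lfloor>a\<rfloor>)" by simp
        also have "real (nat \<lfloor>a\<rfloor>) = of_int \<lfloor>a\<rfloor>" using a0 by simp
        also have "\<dots> \<le> a" by simp
        finally have "real j \<le> a" .
        moreover have "n - 1 < n" using n by simp
        ultimately show ?thesis using H qj unfolding a_def by blast
      qed
    qed
  next
    assume H: "\<forall>q < ell \<alpha> \<epsilon> n. x q = y q"
    show "\<forall>i<n. \<forall>j. real j \<le> - ln \<epsilon> + \<alpha> * real i \<longrightarrow> x (i + j) = y (i + j)"
    proof (intro allI impI)
      fix i j assume i: "i < n" and j: "real j \<le> - ln \<epsilon> + \<alpha> * real i"
      have "\<alpha> * real i \<le> \<alpha> * real (n - 1)" using i assms(3) by (intro mult_left_mono) auto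
      then have "real j \<le> - ln \<epsilon> + \<alpha> * real (n - 1)" using j by linarith
      then have "j \<le> nat \<lfloor>- ln \<epsilon> + \<alpha> * real (n - 1)\<rfloor>"
      proof -
        assume jj: "real j \<le> - ln \<epsilon> + \<alpha> * real (n - 1)"
        have "int j \<le> \<lfloor>- ln \<epsilon> + \<alpha> * real (n - 1)\<rfloor>" using jj by (simp add: le_floor_iff)
        then show ?thesis by simp
      qed
      then have "i + j < ell \<alpha> \<epsilon> n" using i unfolding ell_def by auto
      then show "x (i + j) = y (i + j)" using H by blast
    qed
  qed
qed

lemma bowen_dist_less_iff:
  assumes "0 < \<epsilon>" "\<epsilon> \<le> 1" "\<alpha> \<ge> 0"
  shows "bowen_dist \<alpha> n x y < \<epsilon> \<longleftrightarrow> (\<forall>q < ell \<alpha> \<epsilon> n. x q = y q)"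
  by (simp only: bowen_dist_less[OF assms(1)] ell_agree[OF assms])

lemma bowen_ball_eq:
  assumes "0 < \<epsilon>" "\<epsilon> \<le> 1" "\<alpha> \<ge> 0"
  shows "bowen_ball X \<alpha> n c \<epsilon> = X \<inter> cyl c (ell \<alpha> \<epsilon> n)"
proof -
  have "y \<in> bowen_ball X \<alpha> n c \<epsilon> \<longleftrightarrow> y \<in> X \<inter> cyl c (ell \<alpha> \<epsilon> n)" for y
    by (simp only: bowen_ball_def cyl_def mem_Collect_eq Int_iff bowen_dist_less_iff[OF assms])
       (auto simp: eq_commute)
  then show ?thesis by blast
qed

lemma ell_ge: "ell \<alpha> \<epsilon> n \<ge> n"
  by (simp add: ell_def)

lemma ell_upper:
  assumes "n \<ge> 1"
  shows "real (ell \<alpha> \<epsilon> n) \<le> (1 + \<alpha>) * real n + (- ln \<epsilon> - \<alpha>) \<or> - ln \<epsilon> + \<alpha> * real (n - 1) < 0"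
  using assms unfolding ell_def
  by (auto simp: of_nat_diff algebra_simps) linarith

lemma ell_bounds:
  assumes "n \<ge> 1" "0 < \<epsilon>" "\<epsilon> \<le> 1" "\<alpha> \<ge> 0"
  shows "real (ell \<alpha> \<epsilon> n) \<le> (1 + \<alpha>) * real n + (- ln \<epsilon> - \<alpha>)"
    and "real (ell \<alpha> \<epsilon> n) > (1 + \<alpha>) * real n + (- ln \<epsilon> - \<alpha>) - 1"
proof -
  have l1: "ln \<epsilon> \<le> 0" using assms by simp
  have l2: "\<alpha> * real (n - 1) \<ge> 0" using assms by simp
  have nn: "- ln \<epsilon> + \<alpha> * real (n - 1) \<ge> 0" using l1 l2 by linarith
  have e: "real (ell \<alpha> \<epsilon> n) = real n + of_int \<lfloor>- ln \<epsilon> + \<alpha> * real (n - 1)\<rfloor>"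
    using assms nn by (simp add: ell_def)
  have r: "\<alpha> * real (n - 1) = \<alpha> * real n - \<alpha>" using assms by (simp add: of_nat_diff algebra_simps)
  show "real (ell \<alpha> \<epsilon> n) \<le> (1 + \<alpha>) * real n + (- ln \<epsilon> - \<alpha>)"
    unfolding e using r of_int_floor_le[of "- ln \<epsilon> + \<alpha> * real (n - 1)"] by (simp add: algebra_simps)
  show "real (ell \<alpha> \<epsilon> n) > (1 + \<alpha>) * real n + (- ln \<epsilon> - \<alpha>) - 1"
    unfolding e using r real_of_int_floor_gt_diff_one[of "- ln \<epsilon> + \<alpha> * real (n - 1)"] by (simp add: algebra_simps)
qed


lemma INF_zero_iff:
  "(INF x\<in>S. f x) = (0::ennreal) \<longleftrightarrow> (\<forall>e>0. \<exists>x\<in>S. f x < ennreal e)"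
proof
  assume "(INF x\<in>S. f x) = 0"
  then have "\<forall>y>0. \<exists>x\<in>S. f x < y" using INF_eq_bot_iff[of f S] by (simp add: bot_ennreal)
  then show "\<forall>e>0. \<exists>x\<in>S. f x < ennreal e" by auto
next
  assume H: "\<forall>e>0. \<exists>x\<in>S. f x < ennreal e"
  have "\<forall>y>0. \<exists>x\<in>S. f x < y"
  proof (intro allI impI)
    fix y :: ennreal assume y: "y > 0"
    obtain e where e: "e > 0" "ennreal e \<le> y"
    proof (cases y rule: ennreal_cases)
      case (real r) then show ?thesis using y that by auto
    next
      case top then show ?thesis using that[of 1] by auto
    qed
    then obtain x where "x \<in> S" "f x < ennreal e" using H by auto
    then show "\<exists>x\<in>S. f x < y" using e by (auto intro: less_le_trans)
  qed
  then show "(INF x\<in>S. f x) = 0" using INF_eq_bot_iff[of f S] by (simp add: bot_ennreal)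
qed

lemma INF_zero_transfer:
  assumes "(INF x\<in>S. f x) = (0::ennreal)" "D > 0"
    "\<And>x. x \<in> S \<Longrightarrow> \<exists>y\<in>T. g y \<le> ennreal D * f x"
  shows "(INF y\<in>T. g y) = 0"
  unfolding INF_zero_iff
proof (intro allI impI)
  fix e :: real assume e: "e > 0"
  have eD: "e / D > 0" using e assms(2) by simp
  then obtain x where x: "x \<in> S" "f x < ennreal (e / D)"
    using assms(1)[unfolded INF_zero_iff] by blast
  obtain y where y: "y \<in> T" "g y \<le> ennreal D * f x" using assms(3)[OF x(1)] by auto
  have "ennreal D * f x < ennreal D * ennreal (e / D)"
    using x(2) assms(2) by (intro ennreal_mult_strict_left_mono) auto
  also have "\<dots> = ennreal e" using assms(2) e by (simp add: ennreal_mult[symmetric])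
  finally show "\<exists>y\<in>T. g y < ennreal e" using y by (auto intro: le_less_trans)
qed

definition cw :: "real \<Rightarrow> nat set \<times> (nat \<Rightarrow> seq) \<times> (nat \<Rightarrow> nat) \<Rightarrow> ennreal" where
  "cw t = (\<lambda>(I, c, m). (\<Sum>i. if i \<in> I then ennreal (exp (- t * real (m i))) else 0))"

definition CovS :: "seq set \<Rightarrow> seq set \<Rightarrow> nat \<Rightarrow> (nat set \<times> (nat \<Rightarrow> seq) \<times> (nat \<Rightarrow> nat)) set" where
  "CovS X K L = {(I, c, m). (\<forall>i\<in>I. c i \<in> X \<and> m i \<ge> L) \<and> K \<subseteq> (\<Union>i\<in>I. cyl (c i) (m i))}"

definition BCovS :: "seq set \<Rightarrow> real \<Rightarrow> seq set \<Rightarrow> real \<Rightarrow> nat \<Rightarrow> (nat set \<times> (nat \<Rightarrow> seq) \<times> (nat \<Rightarrow> nat)) set" where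
  "BCovS X \<alpha> K \<epsilon> N = {(I, c, m). (\<forall>i\<in>I. c i \<in> X \<and> m i \<ge> N) \<and>
                          K \<subseteq> (\<Union>i\<in>I. bowen_ball X \<alpha> (m i) (c i) \<epsilon>)}"

definition Ccov :: "seq set \<Rightarrow> seq set \<Rightarrow> real \<Rightarrow> nat \<Rightarrow> ennreal" where
  "Ccov X K t L = (INF p\<in>CovS X K L. cw t p)"

lemma bowenM_N_eq: "bowenM_N X \<alpha> K s \<epsilon> N = (INF p\<in>BCovS X \<alpha> K \<epsilon> N. cw s p)"
  unfolding bowenM_N_def BCovS_def cw_def by simp

lemma cw_le:
  assumes "\<And>i. i \<in> I \<Longrightarrow> exp (- t * real (m i)) \<le> D * exp (- s * real (m' i))" "D \<ge> 0"
  shows "cw t (I, c, m) \<le> ennreal D * cw s (I, c', m')"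
proof -
  have "cw t (I, c, m) \<le> (\<Sum>i. ennreal D * (if i \<in> I then ennreal (exp (- s * real (m' i))) else 0))"
    unfolding cw_def prod.case
    apply (rule suminf_le[OF _ summableI summableI])
    using assms by (auto simp: ennreal_mult[symmetric] intro: ennreal_leI)
  also have "\<dots> = ennreal D * cw s (I, c', m')"
    unfolding cw_def by (simp add: ennreal_suminf_cmult)
  finally show ?thesis .
qed


lemma bowenM_N_imp_Ccov:
  assumes "0 < \<epsilon>" "\<epsilon> \<le> 1" "\<alpha> \<ge> 0" "s \<ge> 0"
    and "bowenM_N X \<alpha> K s \<epsilon> N = 0"
  shows "Ccov X K (s / (1 + \<alpha>)) N = 0"
proof -
  define t where "t = s / (1 + \<alpha>)"
  define b where "b = - ln \<epsilon> - \<alpha>"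
  define D where "D = max 1 (exp (- t * (b - 1)))"
  have t0: "t \<ge> 0" using assms unfolding t_def by simp
  have ts: "t * (1 + \<alpha>) = s" using assms unfolding t_def by simp
  have D0: "D > 0" unfolding D_def by simp
  have key: "exp (- t * real (ell \<alpha> \<epsilon> n)) \<le> D * exp (- s * real n)" for n
  proof (cases "n = 0")
    case True then show ?thesis by (simp add: ell_def D_def)
  next
    case False
    then have "real (ell \<alpha> \<epsilon> n) > (1 + \<alpha>) * real n + b - 1"
      using ell_bounds(2)[of n \<epsilon> \<alpha>] assms unfolding b_def by simp
    then have "t * real (ell \<alpha> \<epsilon> n) \<ge> t * ((1 + \<alpha>) * real n + b - 1)"
      using t0 by (intro mult_left_mono) auto
    moreover have "t * ((1 + \<alpha>) * real n + b - 1) = (t * (1 + \<alpha>)) * real n + t * (b - 1)"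
      by (simp add: algebra_simps)
    ultimately have "- t * real (ell \<alpha> \<epsilon> n) \<le> - t * (b - 1) + - s * real n"
      unfolding ts by simp
    then have "exp (- t * real (ell \<alpha> \<epsilon> n)) \<le> exp (- t * (b - 1)) * exp (- s * real n)"
      by (simp add: exp_add[symmetric])
    also have "\<dots> \<le> D * exp (- s * real n)" unfolding D_def by (intro mult_right_mono) auto
    finally show ?thesis .
  qed
  have "(INF p\<in>CovS X K N. cw t p) = 0"
  proof (rule INF_zero_transfer[where f = "cw s" and S = "BCovS X \<alpha> K \<epsilon> N" and D = D])
    show "(INF p\<in>BCovS X \<alpha> K \<epsilon> N. cw s p) = 0" using assms(5) by (simp add: bowenM_N_eq)
    show "D > 0" by (rule D0)
    fix p assume p: "p \<in> BCovS X \<alpha> K \<epsilon> N"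
    obtain I c m where pe: "p = (I, c, m)" by (cases p) auto
    have "(I, c, \<lambda>i. ell \<alpha> \<epsilon> (m i)) \<in> CovS X K N"
      using p ell_ge[of "m _" \<alpha> \<epsilon>] unfolding pe BCovS_def CovS_def bowen_ball_eq[OF assms(1-3)]
      by (force intro: le_trans)
    moreover have "cw t (I, c, \<lambda>i. ell \<alpha> \<epsilon> (m i)) \<le> ennreal D * cw s (I, c, m)"
      by (rule cw_le) (use key D0 in auto)
    ultimately show "\<exists>y\<in>CovS X K N. cw t y \<le> ennreal D * cw s p" unfolding pe by blast
  qed
  then show ?thesis unfolding Ccov_def t_def .
qed

lemma Ccov_imp_bowenM_N:
  assumes "0 < \<epsilon>" "\<epsilon> \<le> 1" "\<alpha> \<ge> 0" "s \<ge> 0" "K \<subseteq> X"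
    and "\<forall>L. Ccov X K (s / (1 + \<alpha>)) L = 0"
  shows "bowenM_N X \<alpha> K s \<epsilon> N = 0"
proof -
  define t where "t = s / (1 + \<alpha>)"
  define b where "b = - ln \<epsilon> - \<alpha>"
  define D where "D = exp (s + t * b)"
  define L where "L = nat \<lceil>(1 + \<alpha>) * (real N + 1) + \<bar>b\<bar>\<rceil>"
  define mm where "mm = (\<lambda>l::nat. nat \<lfloor>(real l - b) / (1 + \<alpha>)\<rfloor>)"
  have t0: "t \<ge> 0" using assms unfolding t_def by simp
  have ts: "t * (1 + \<alpha>) = s" using assms unfolding t_def by simp
  have a1: "1 + \<alpha> > 0" using assms by simp
  have D0: "D > 0" unfolding D_def by simp
  have mmN: "mm l \<ge> N" "mm l \<ge> 1" if "l \<ge> L" for l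
  proof -
    have "real l \<ge> (1 + \<alpha>) * (real N + 1) + \<bar>b\<bar>"
      using that unfolding L_def by linarith
    then have "real l - b \<ge> (1 + \<alpha>) * (real N + 1)" by linarith
    then have "(real l - b) / (1 + \<alpha>) \<ge> real N + 1" using a1 by (simp add: field_simps)
    then have "\<lfloor>(real l - b) / (1 + \<alpha>)\<rfloor> \<ge> int N + 1" by linarith
    then show "mm l \<ge> N" "mm l \<ge> 1" unfolding mm_def by auto
  qed
  have mm_real: "real (mm l) \<le> (real l - b) / (1 + \<alpha>)" "real (mm l) > (real l - b) / (1 + \<alpha>) - 1"
    if "l \<ge> L" for l
  proof -
    have "\<lfloor>(real l - b) / (1 + \<alpha>)\<rfloor> \<ge> 1" using mmN(2)[OF that] unfolding mm_def by linarith
    then have e: "real (mm l) = of_int \<lfloor>(real l - b) / (1 + \<alpha>)\<rfloor>" unfolding mm_def by simp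
    show "real (mm l) \<le> (real l - b) / (1 + \<alpha>)" unfolding e by simp
    show "real (mm l) > (real l - b) / (1 + \<alpha>) - 1" unfolding e by linarith
  qed
  have ell_le: "ell \<alpha> \<epsilon> (mm l) \<le> l" if "l \<ge> L" for l
  proof -
    have "real (ell \<alpha> \<epsilon> (mm l)) \<le> (1 + \<alpha>) * real (mm l) + b"
      using ell_bounds(1)[OF mmN(2)[OF that] assms(1-3)] unfolding b_def .
    also have "\<dots> \<le> (1 + \<alpha>) * ((real l - b) / (1 + \<alpha>)) + b"
      using mm_real(1)[OF that] a1 by (intro add_right_mono mult_left_mono) auto
    also have "\<dots> = real l" using a1 by simp
    finally show ?thesis by simp
  qed
  have key: "exp (- s * real (mm l)) \<le> D * exp (- t * real l)" if "l \<ge> L" for l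
  proof -
    have "s * real (mm l) \<ge> s * ((real l - b) / (1 + \<alpha>) - 1)"
      using mm_real(2)[OF that] assms(4) by (intro mult_left_mono) auto
    also have "s * ((real l - b) / (1 + \<alpha>) - 1) = t * (real l - b) - s"
      unfolding t_def by (simp add: right_diff_distrib diff_divide_distrib)
    finally have "- s * real (mm l) \<le> (s + t * b) + - t * real l" by (simp add: right_diff_distrib)
    then have "exp (- s * real (mm l)) \<le> exp ((s + t * b) + - t * real l)" by simp
    then show ?thesis unfolding D_def by (simp only: exp_add[symmetric])
  qed
  have "(INF p\<in>BCovS X \<alpha> K \<epsilon> N. cw s p) = 0"
  proof (rule INF_zero_transfer[where f = "cw t" and S = "CovS X K L" and D = D])
    show "(INF p\<in>CovS X K L. cw t p) = 0" using assms(6) unfolding Ccov_def t_def by simp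
    show "D > 0" by (rule D0)
    fix p assume p: "p \<in> CovS X K L"
    obtain I c m where pe: "p = (I, c, m)" by (cases p) auto
    have mL: "\<And>i. i \<in> I \<Longrightarrow> m i \<ge> L" using p unfolding pe CovS_def by auto
    have "(I, c, \<lambda>i. mm (m i)) \<in> BCovS X \<alpha> K \<epsilon> N"
    proof -
      have "\<forall>i\<in>I. c i \<in> X \<and> mm (m i) \<ge> N" using p mmN(1)[OF mL] unfolding pe CovS_def by auto
      moreover have "K \<subseteq> (\<Union>i\<in>I. bowen_ball X \<alpha> (mm (m i)) (c i) \<epsilon>)"
      proof
        fix x assume x: "x \<in> K"
        then obtain i where i: "i \<in> I" "x \<in> cyl (c i) (m i)" using p unfolding pe CovS_def by auto
        have "x \<in> cyl (c i) (ell \<alpha> \<epsilon> (mm (m i)))"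
          using i ell_le[OF mL[OF i(1)]] unfolding cyl_def by auto
        then show "x \<in> (\<Union>i\<in>I. bowen_ball X \<alpha> (mm (m i)) (c i) \<epsilon>)"
          using i x assms(5) unfolding bowen_ball_eq[OF assms(1-3)] by auto
      qed
      ultimately show ?thesis unfolding BCovS_def by auto
    qed
    moreover have "cw s (I, c, \<lambda>i. mm (m i)) \<le> ennreal D * cw t (I, c, m)"
      by (rule cw_le) (use key mL D0 in auto)
    ultimately show "\<exists>y\<in>BCovS X \<alpha> K \<epsilon> N. cw s y \<le> ennreal D * cw t p" unfolding pe by blast
  qed
  then show ?thesis by (simp add: bowenM_N_eq)
qed

lemma bowenM_N_mono: "N \<le> N' \<Longrightarrow> bowenM_N X \<alpha> K s \<epsilon> N \<le> bowenM_N X \<alpha> K s \<epsilon> N'"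
  unfolding bowenM_N_eq BCovS_def by (rule INF_superset_mono) auto

lemma bowenM_eq_SUP: "bowenM X \<alpha> K s \<epsilon> = (SUP N. bowenM_N X \<alpha> K s \<epsilon> N)"
proof -
  have "incseq (\<lambda>N. bowenM_N X \<alpha> K s \<epsilon> N)" by (intro monoI bowenM_N_mono)
  then have "(\<lambda>N. bowenM_N X \<alpha> K s \<epsilon> N) \<longlonglongrightarrow> (SUP N. bowenM_N X \<alpha> K s \<epsilon> N)"
    by (rule LIMSEQ_SUP)
  then show ?thesis unfolding bowenM_def by (rule limI)
qed

lemma bowenM_zero_iff:
  assumes "0 < \<epsilon>" "\<epsilon> \<le> 1" "\<alpha> \<ge> 0" "s \<ge> 0" "K \<subseteq> X"
  shows "bowenM X \<alpha> K s \<epsilon> = 0 \<longleftrightarrow> (\<forall>L. Ccov X K (s / (1 + \<alpha>)) L = 0)"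
proof
  assume H: "bowenM X \<alpha> K s \<epsilon> = 0"
  have "\<forall>N. bowenM_N X \<alpha> K s \<epsilon> N = 0"
  proof
    fix N
    have "bowenM_N X \<alpha> K s \<epsilon> N \<le> bowenM X \<alpha> K s \<epsilon>"
      unfolding bowenM_eq_SUP by (rule SUP_upper) auto
    then show "bowenM_N X \<alpha> K s \<epsilon> N = 0" using H by simp
  qed
  then show "\<forall>L. Ccov X K (s / (1 + \<alpha>)) L = 0"
    using bowenM_N_imp_Ccov[OF assms(1-4)] by blast
next
  assume H: "\<forall>L. Ccov X K (s / (1 + \<alpha>)) L = 0"
  have "\<forall>N. bowenM_N X \<alpha> K s \<epsilon> N = 0"
    using Ccov_imp_bowenM_N[OF assms H] by blast
  then show "bowenM X \<alpha> K s \<epsilon> = 0" unfolding bowenM_eq_SUP by simp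
qed


lemma sdist_le_sdiam: "x \<in> U \<Longrightarrow> y \<in> U \<Longrightarrow> sdist x y \<le> sdiam U"
  unfolding sdiam_def
  by (auto intro!: cSup_upper bdd_aboveI[where M = 1] simp: sdist_le_1)

lemma sdiam_nonneg: "sdiam U \<ge> 0"
proof (cases "U = {}")
  case True then show ?thesis by (simp add: sdiam_def)
next
  case False
  then obtain x where "x \<in> U" by auto
  then have "sdist x x \<le> sdiam U" using sdist_le_sdiam[of x U x] by simp
  then show ?thesis by (simp add: sdist_def)
qed

lemma sdiam_le:
  assumes "U \<noteq> {}" "\<And>x y. x \<in> U \<Longrightarrow> y \<in> U \<Longrightarrow> sdist x y \<le> d"
  shows "sdiam U \<le> d"
proof -
  obtain x where x: "x \<in> U" using assms(1) by auto
  have ne: "{sdist x y |x y. x \<in> U \<and> y \<in> U} \<noteq> {}" using x by blast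
  have "Sup {sdist x y |x y. x \<in> U \<and> y \<in> U} \<le> d"
    by (rule cSup_least[OF ne]) (use assms(2) in auto)
  then show ?thesis unfolding sdiam_def using assms(1) by simp
qed

lemma sdiam_cyl: "sdiam (cyl c m) \<le> exp (- real m)"
proof (rule sdiam_le)
  show "cyl c m \<noteq> {}" unfolding cyl_def by auto
  fix x y assume "x \<in> cyl c m" "y \<in> cyl c m"
  then show "sdist x y \<le> exp (- real m)" unfolding cyl_def sdist_le_exp by auto
qed

lemma hausdorff_pre_mono: "0 < \<delta> \<Longrightarrow> \<delta> \<le> \<delta>' \<Longrightarrow> hausdorff_pre t \<delta>' E \<le> hausdorff_pre t \<delta> E"
  unfolding hausdorff_pre_def by (rule INF_superset_mono) (auto intro: order_trans)

lemma antimono_Lim_at_right: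
  fixes f :: "real \<Rightarrow> ennreal"
  assumes "\<And>x y. 0 < x \<Longrightarrow> x \<le> y \<Longrightarrow> f y \<le> f x"
  shows "Lim (at_right 0) f = (SUP x\<in>{0<..}. f x)"
proof -
  have "(f \<longlongrightarrow> (SUP x\<in>{0<..}. f x)) (at_right 0)"
  proof (rule order_tendstoI)
    fix a assume "a < (SUP x\<in>{0<..}. f x)"
    then obtain x where x: "x > 0" "a < f x" by (auto simp: less_SUP_iff)
    show "eventually (\<lambda>y. a < f y) (at_right 0)"
      unfolding eventually_at_right_field
    proof (intro exI[of _ x] conjI allI impI)
      show "x > 0" by fact
      fix y :: real assume "y > 0" "y < x"
      then have "f x \<le> f y" using assms by auto
      then show "a < f y" using x by (auto intro: less_le_trans)
    qed
  next
    fix a assume a: "(SUP x\<in>{0<..}. f x) < a"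
    show "eventually (\<lambda>y. f y < a) (at_right 0)"
      unfolding eventually_at_right_field
    proof (intro exI[of _ 1] conjI allI impI)
      fix y :: real assume "y > 0" "y < 1"
      then have "f y \<le> (SUP x\<in>{0<..}. f x)" by (intro SUP_upper) auto
      then show "f y < a" using a by (auto intro: le_less_trans)
    qed simp
  qed
  then show ?thesis by (rule tendsto_Lim[OF trivial_limit_at_right_real])
qed

lemma hausdorff_measure_eq_SUP:
  "hausdorff_measure t E = (SUP \<delta>\<in>{0<..}. hausdorff_pre t \<delta> E)"
  unfolding hausdorff_measure_def
  by (rule antimono_Lim_at_right) (rule hausdorff_pre_mono)

lemma Ccov_imp_hausdorff:
  assumes "t > 0" and H: "\<forall>L. Ccov X E t L = 0"
  shows "hausdorff_measure t E = 0"
proof -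
  have "hausdorff_pre t \<delta> E = 0" if "\<delta> > 0" for \<delta>
  proof -
    define L where "L = nat \<lceil>- ln \<delta>\<rceil>"
    have "- ln \<delta> \<le> real L" unfolding L_def by (rule real_nat_ceiling_ge)
    then have "exp (- real L) \<le> exp (ln \<delta>)" by simp
    then have eL: "exp (- real L) \<le> \<delta>" using that by simp
    show ?thesis unfolding hausdorff_pre_def
    proof (rule INF_zero_transfer[where f = "cw t" and S = "CovS X E L" and D = 1])
      show "(INF p\<in>CovS X E L. cw t p) = 0" using H unfolding Ccov_def by simp
      show "(1::real) > 0" by simp
      fix p assume p: "p \<in> CovS X E L"
      obtain I c m where pe: "p = (I, c, m)" by (cases p) auto
      define U where "U = (\<lambda>i. if i \<in> I then cyl (c i) (m i) else {})"
      have mL: "\<And>i. i \<in> I \<Longrightarrow> m i \<ge> L" using p unfolding pe CovS_def by auto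
      have dU: "sdiam (U i) \<le> (if i \<in> I then exp (- real (m i)) else 0)" for i
      proof (cases "i \<in> I")
        case True then show ?thesis using sdiam_cyl[of "c i" "m i"] by (simp add: U_def)
      next
        case False then show ?thesis by (simp add: U_def sdiam_def)
      qed
      have "U \<in> {U. E \<subseteq> (\<Union>i. U i) \<and> (\<forall>i. sdiam (U i) \<le> \<delta>)}"
      proof (safe)
        fix x assume "x \<in> E"
        then obtain i where "i \<in> I" "x \<in> cyl (c i) (m i)" using p unfolding pe CovS_def by auto
        then show "x \<in> (\<Union>i. U i)" unfolding U_def by auto
      next
        fix i
        show "sdiam (U i) \<le> \<delta>"
        proof (cases "i \<in> I")
          case True
          then have e1: "exp (- real (m i)) \<le> exp (- real L)" using mL by simp
          have "sdiam (U i) \<le> exp (- real (m i))" using dU[of i] True by simp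
          then show ?thesis using e1 eL by linarith
        next
          case False then show ?thesis using dU[of i] that by simp
        qed
      qed
      moreover have "(\<Sum>i. ennreal (sdiam (U i) powr t)) \<le> ennreal 1 * cw t p"
        unfolding pe cw_def prod.case ennreal_1 mult_1
      proof (rule suminf_le[OF _ summableI summableI])
        fix i
        show "ennreal (sdiam (U i) powr t) \<le> (if i \<in> I then ennreal (exp (- t * real (m i))) else 0)"
        proof (cases "i \<in> I")
          case True
          have "sdiam (U i) powr t \<le> exp (- real (m i)) powr t"
            using dU[of i] True sdiam_nonneg assms(1) by (intro powr_mono2) auto
          also have "\<dots> = exp (- t * real (m i))" by (simp add: powr_def)
          finally show ?thesis using True by (simp add: ennreal_leI)
        next
          case False then show ?thesis by (simp add: U_def sdiam_def)
        qed
      qed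
      ultimately show "\<exists>U\<in>{U. E \<subseteq> (\<Union>i. U i) \<and> (\<forall>i. sdiam (U i) \<le> \<delta>)}.
          (\<Sum>i. ennreal (sdiam (U i) powr t)) \<le> ennreal 1 * cw t p" by blast
    qed
  qed
  then have "(SUP \<delta>\<in>{0<..}. hausdorff_pre t \<delta> E) = (SUP \<delta>\<in>{(0::real)<..}. (0::ennreal))"
    by (intro SUP_cong) auto
  then show ?thesis unfolding hausdorff_measure_eq_SUP by simp
qed


lemma geo_sum_ennreal: "e \<ge> 0 \<Longrightarrow> (\<Sum>i. ennreal (e / 2 ^ (i + 2))) = ennreal (e / 2)"
proof -
  assume e: "e \<ge> 0"
  have "(\<lambda>n. (1/2::real) ^ n) sums (1 / (1 - 1/2))" by (rule geometric_sums) simp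
  then have "(\<lambda>n. (e / 4) * (1/2::real) ^ n) sums ((e / 4) * (1 / (1 - 1/2)))" by (rule sums_mult)
  moreover have "(\<lambda>n. (e / 4) * (1/2::real) ^ n) = (\<lambda>i. e / 2 ^ (i + 2))"
    by (auto simp: power_add field_simps power_one_over)
  moreover have "(e / 4) * (1 / (1 - 1/2)) = e / 2" by simp
  ultimately have "(\<lambda>i. e / 2 ^ (i + 2)) sums (e / 2)" by simp
  then show ?thesis using e by (intro suminf_ennreal_eq) auto
qed

lemma hausdorff_imp_Ccov:
  assumes "E \<subseteq> X" "t > 0" and H: "hausdorff_measure t E = 0"
  shows "Ccov X E t L = 0"
proof -
  have pre0: "hausdorff_pre t \<delta> E = 0" if "\<delta> > 0" for \<delta>
  proof -
    have "hausdorff_pre t \<delta> E \<le> hausdorff_measure t E"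
      unfolding hausdorff_measure_eq_SUP using that by (intro SUP_upper) auto
    then show ?thesis using H by simp
  qed
  show ?thesis unfolding Ccov_def INF_zero_iff
  proof (intro allI impI)
    fix e :: real assume e: "e > 0"
    define e1 where "e1 = e / (2 * exp t)"
    have e1: "e1 > 0" using e unfolding e1_def by simp
    have "hausdorff_pre t (exp (- real L)) E = 0" using pre0 by simp
    then have "\<exists>U\<in>{U. E \<subseteq> (\<Union>i. U i) \<and> (\<forall>i. sdiam (U i) \<le> exp (- real L))}.
        (\<Sum>i. ennreal (sdiam (U i) powr t)) < ennreal e1"
      unfolding hausdorff_pre_def INF_zero_iff using e1 by blast
    then obtain U where U0: "U \<in> {U. E \<subseteq> (\<Union>i. U i) \<and> (\<forall>i. sdiam (U i) \<le> exp (- real L))}"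
      and S: "(\<Sum>i. ennreal (sdiam (U i) powr t)) < ennreal e1" by blast
    from U0 have U: "E \<subseteq> (\<Union>i. U i)" "\<And>i. sdiam (U i) \<le> exp (- real L)" by auto
    define I where "I = {i. U i \<inter> E \<noteq> {}}"
    define c where "c = (\<lambda>i. SOME x. x \<in> U i \<inter> E)"
    define q where "q = (\<lambda>i::nat. nat \<lceil>ln (2 ^ (i + 2) / e) / t\<rceil>)"
    define m where "m = (\<lambda>i. if sdiam (U i) > 0 then nat \<lfloor>- ln (sdiam (U i))\<rfloor> else max L (q i))"
    have cI: "c i \<in> U i \<inter> E" if "i \<in> I" for i
    proof -
      have "\<exists>x. x \<in> U i \<inter> E" using that unfolding I_def by auto
      then show ?thesis unfolding c_def by (rule someI_ex)
    qed
    have lnd: "- ln (sdiam (U i)) \<ge> real L" if "sdiam (U i) > 0" for i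
    proof -
      have "ln (sdiam (U i)) \<le> ln (exp (- real L))"
        using U(2)[of i] that by (subst ln_le_cancel_iff) auto
      then show ?thesis by simp
    qed
    have mreal: "real (m i) = of_int \<lfloor>- ln (sdiam (U i))\<rfloor>" if "sdiam (U i) > 0" for i
    proof -
      have "\<lfloor>- ln (sdiam (U i))\<rfloor> \<ge> 0" using lnd[OF that] by linarith
      then show ?thesis using that unfolding m_def by simp
    qed
    have mL: "m i \<ge> L" for i
    proof (cases "sdiam (U i) > 0")
      case True
      have "real L \<le> of_int \<lfloor>- ln (sdiam (U i))\<rfloor>" using lnd[OF True]
        by (metis le_floor_iff of_int_of_nat_eq of_int_le_iff floor_of_nat)
      then have "real L \<le> real (m i)" using mreal[OF True] by simp
      then show ?thesis by simp
    next
      case False then show ?thesis unfolding m_def by simp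
    qed
    have cover: "E \<subseteq> (\<Union>i\<in>I. cyl (c i) (m i))"
    proof
      fix x assume x: "x \<in> E"
      then obtain i where i: "x \<in> U i" using U(1) by auto
      then have iI: "i \<in> I" using x unfolding I_def by auto
      have ci: "c i \<in> U i" using cI[OF iI] by auto
      have sd: "sdist x (c i) \<le> sdiam (U i)" using i ci by (rule sdist_le_sdiam)
      have "x \<in> cyl (c i) (m i)"
      proof (cases "sdiam (U i) > 0")
        case True
        have "real (m i) \<le> - ln (sdiam (U i))" using mreal[OF True] by simp
        then have "exp (ln (sdiam (U i))) \<le> exp (- real (m i))" by simp
        then have "sdiam (U i) \<le> exp (- real (m i))" using True by simp
        then have "sdist x (c i) \<le> exp (- real (m i))" using sd by linarith
        then show ?thesis unfolding cyl_def sdist_le_exp by auto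
      next
        case False
        then have "sdist x (c i) \<le> 0" using sd by simp
        then have "x = c i" using sdist_nonneg[of x "c i"] sdist_eq_0_iff[of x "c i"] by simp
        then show ?thesis unfolding cyl_def by simp
      qed
      then show "x \<in> (\<Union>i\<in>I. cyl (c i) (m i))" using iI by auto
    qed
    have inS: "(I, c, m) \<in> CovS X E L" unfolding CovS_def using cover mL cI assms(1) by auto
    have termb: "(if i \<in> I then ennreal (exp (- t * real (m i))) else 0) \<le>
        ennreal (exp t) * ennreal (sdiam (U i) powr t) + ennreal (e / 2 ^ (i + 2))" for i
    proof (cases "i \<in> I")
      case False then show ?thesis by simp
    next
      case True
      have g0: "e / 2 ^ (i + 2) \<ge> 0" using e by simp
      have p0: "exp t * sdiam (U i) powr t \<ge> 0" by simp
      have "exp (- t * real (m i)) \<le> exp t * sdiam (U i) powr t + e / 2 ^ (i + 2)"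
      proof (cases "sdiam (U i) > 0")
        case True
        have "real (m i) > - ln (sdiam (U i)) - 1" using mreal[OF True] by linarith
        then have "t * real (m i) \<ge> t * (- ln (sdiam (U i)) - 1)"
          using assms(2) by (intro mult_left_mono) auto
        then have "- t * real (m i) \<le> t + t * ln (sdiam (U i))" by (simp add: algebra_simps)
        then have "exp (- t * real (m i)) \<le> exp (t + t * ln (sdiam (U i)))" by simp
        also have "\<dots> = exp t * sdiam (U i) powr t" using True by (simp add: powr_def exp_add mult.commute)
        finally show ?thesis using g0 by linarith
      next
        case False
        have "ln (2 ^ (i + 2) / e) / t \<le> real (q i)" unfolding q_def by (rule real_nat_ceiling_ge)
        then have "ln (2 ^ (i + 2) / e) \<le> t * real (q i)" using assms(2) by (simp add: divide_le_eq mult.commute)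
        moreover have "real (q i) \<le> real (m i)" using False unfolding m_def by simp
        then have "t * real (q i) \<le> t * real (m i)" using assms(2) by (intro mult_left_mono) auto
        ultimately have "- t * real (m i) \<le> - ln (2 ^ (i + 2) / e)" by simp
        then have "exp (- t * real (m i)) \<le> exp (- ln (2 ^ (i + 2) / e))" by simp
        also have "\<dots> = e / 2 ^ (i + 2)" using e by (simp add: exp_minus)
        finally show ?thesis using p0 by linarith
      qed
      then show ?thesis using True g0 p0
        by (simp add: ennreal_mult[symmetric] ennreal_plus[symmetric] ennreal_leI del: ennreal_plus)
    qed
    obtain S' where S': "(\<Sum>i. ennreal (sdiam (U i) powr t)) = ennreal S'" "S' \<ge> 0" "S' < e1"
    proof (cases "(\<Sum>i. ennreal (sdiam (U i) powr t))" rule: ennreal_cases)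
      case (real r) then show ?thesis using S that by (auto simp: ennreal_less_iff)
    next
      case top then show ?thesis using S by simp
    qed
    have "cw t (I, c, m) \<le> (\<Sum>i. ennreal (exp t) * ennreal (sdiam (U i) powr t) + ennreal (e / 2 ^ (i + 2)))"
      unfolding cw_def prod.case by (rule suminf_le[OF termb summableI summableI])
    also have "\<dots> = ennreal (exp t) * (\<Sum>i. ennreal (sdiam (U i) powr t)) + (\<Sum>i. ennreal (e / 2 ^ (i + 2)))"
      by (subst suminf_add[OF summableI summableI, symmetric]) (simp add: ennreal_suminf_cmult)
    also have "\<dots> = ennreal (exp t) * ennreal S' + ennreal (e / 2)"
      by (simp only: S'(1) geo_sum_ennreal[OF less_imp_le[OF e]])
    also have "\<dots> = ennreal (exp t * S' + e / 2)"
      using S'(2) e by (simp add: ennreal_mult ennreal_plus)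
    also have "\<dots> < ennreal e"
    proof (rule ennreal_lessI[OF e])
      have "exp t * S' < exp t * e1" using S' by simp
      also have "exp t * e1 = e / 2" unfolding e1_def by simp
      finally show "exp t * S' + e / 2 < e" by simp
    qed
    finally show "\<exists>p\<in>CovS X E L. cw t p < ennreal e" using inS by blast
  qed
qed

lemma hausdorff_zero_iff:
  assumes "E \<subseteq> X" "t > 0"
  shows "hausdorff_measure t E = 0 \<longleftrightarrow> (\<forall>L. Ccov X E t L = 0)"
  using hausdorff_imp_Ccov[OF assms] Ccov_imp_hausdorff[OF assms(2)] by blast


lemma Ccov_empty: "Ccov X {} t L = 0"
proof -
  have "({}, \<lambda>i. undefined, \<lambda>i. L) \<in> CovS X {} L" unfolding CovS_def by auto
  then have "Ccov X {} t L \<le> cw t ({}, \<lambda>i. undefined, \<lambda>i. L)"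
    unfolding Ccov_def by (rule INF_lower)
  also have "\<dots> = 0" unfolding cw_def by simp
  finally show ?thesis by simp
qed

lemma Ccov_ge1: assumes "K \<noteq> {}" shows "Ccov X K 0 0 \<ge> 1"
  unfolding Ccov_def
proof (rule INF_greatest)
  fix p assume p: "p \<in> CovS X K 0"
  obtain I c m where pe: "p = (I, c, m)" by (cases p) auto
  obtain i0 where i0: "i0 \<in> I" using p assms unfolding pe CovS_def by auto
  have "sum (\<lambda>i. if i \<in> I then ennreal (exp (- 0 * real (m i))) else 0) {i0}
      \<le> (\<Sum>i. if i \<in> I then ennreal (exp (- 0 * real (m i))) else 0)"
    by (rule sum_le_suminf[OF summableI]) auto
  then show "1 \<le> cw 0 p" unfolding pe cw_def using i0 by simp
qed

lemma Inf_ereal_scale: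
  assumes "c > 0"
  shows "Inf (ereal ` ((\<lambda>t. c * t) ` Z)) = ereal c * Inf (ereal ` Z)"
proof (rule antisym)
  let ?B = "Inf (ereal ` ((\<lambda>t. c * t) ` Z))"
  have "ereal (1 / c) * ?B \<le> Inf (ereal ` Z)"
  proof (rule Inf_greatest)
    fix x assume "x \<in> ereal ` Z"
    then obtain t where t: "t \<in> Z" "x = ereal t" by auto
    have "?B \<le> ereal (c * t)" using t by (intro Inf_lower) auto
    then have "ereal (1 / c) * ?B \<le> ereal (1 / c) * ereal (c * t)"
      using assms by (intro ereal_mult_left_mono) auto
    also have "\<dots> = x" using assms t by simp
    finally show "ereal (1 / c) * ?B \<le> x" .
  qed
  then have "ereal c * (ereal (1 / c) * ?B) \<le> ereal c * Inf (ereal ` Z)"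
    using assms by (intro ereal_mult_left_mono) auto
  moreover have "ereal c * (ereal (1 / c) * ?B) = ?B"
    using assms by (simp add: mult.assoc[symmetric])
  ultimately show "?B \<le> ereal c * Inf (ereal ` Z)" by simp
next
  show "ereal c * Inf (ereal ` Z) \<le> Inf (ereal ` ((\<lambda>t. c * t) ` Z))"
  proof (rule Inf_greatest)
    fix x assume "x \<in> ereal ` ((\<lambda>t. c * t) ` Z)"
    then obtain t where t: "t \<in> Z" "x = ereal (c * t)" by auto
    have "Inf (ereal ` Z) \<le> ereal t" using t by (intro Inf_lower) auto
    then have "ereal c * Inf (ereal ` Z) \<le> ereal c * ereal t"
      using assms by (intro ereal_mult_left_mono) auto
    then show "ereal c * Inf (ereal ` Z) \<le> x" using t by simp
  qed
qed

lemma Inf_ereal_pos: "Inf (ereal ` {t::real. 0 < t}) = 0"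
proof -
  have "ereal (Inf {t::real. 0 < t}) = Inf (ereal ` {t::real. 0 < t})"
    by (rule ereal_Inf') (auto intro: bdd_belowI[where m = 0] exI[of _ 1])
  moreover have "Inf {t::real. 0 < t} = 0"
    using cInf_greaterThan[of "0::real"] by (simp add: greaterThan_def)
  ultimately show ?thesis by (simp add: zero_ereal_def)
qed

lemma Inf_ereal_nonneg: "Inf {ereal s |s. 0 \<le> s} = 0"
proof (rule antisym)
  show "Inf {ereal s |s. 0 \<le> s} \<le> 0" by (rule Inf_lower) (auto simp: zero_ereal_def)
  show "0 \<le> Inf {ereal s |s. 0 \<le> s}" by (rule Inf_greatest) auto
qed

lemma crit_eq:
  assumes "E \<subseteq> X" "0 < \<epsilon>" "\<epsilon> \<le> 1" "\<alpha> \<ge> 0"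
  shows "bowen_crit X \<alpha> E \<epsilon> = ereal (1 + \<alpha>) * hausdorff_dim E"
proof -
  define Z where "Z = {t. 0 < t \<and> (\<forall>L. Ccov X E t L = 0)}"
  have a1: "1 + \<alpha> > 0" using assms by simp
  have dimZ: "hausdorff_dim E = Inf (ereal ` Z)"
  proof -
    have "{ereal s |s. 0 < s \<and> hausdorff_measure s E = 0} = ereal ` Z"
      unfolding Z_def using hausdorff_zero_iff[OF assms(1)] by auto
    then show ?thesis unfolding hausdorff_dim_def by simp
  qed
  have BZ: "bowenM X \<alpha> E s \<epsilon> = 0 \<longleftrightarrow> (\<forall>L. Ccov X E (s / (1 + \<alpha>)) L = 0)" if "s \<ge> 0" for s
    using bowenM_zero_iff[OF assms(2,3,4) that assms(1)] .
  show ?thesis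
  proof (cases "E = {}")
    case True
    have "{ereal s |s. 0 \<le> s \<and> bowenM X \<alpha> E s \<epsilon> = 0} = {ereal s |s. 0 \<le> s}"
      using BZ True Ccov_empty by auto
    then have c0: "bowen_crit X \<alpha> E \<epsilon> = 0"
      unfolding bowen_crit_def using Inf_ereal_nonneg by simp
    have "Z = {t. 0 < t}" unfolding Z_def using True Ccov_empty by auto
    then have "hausdorff_dim E = 0" using dimZ Inf_ereal_pos by simp
    then show ?thesis using c0 by simp
  next
    case False
    have "{ereal s |s. 0 \<le> s \<and> bowenM X \<alpha> E s \<epsilon> = 0} = ereal ` ((\<lambda>t. (1 + \<alpha>) * t) ` Z)"
    proof safe
      fix s :: real assume s: "0 \<le> s" "bowenM X \<alpha> E s \<epsilon> = 0"
      then have C: "\<forall>L. Ccov X E (s / (1 + \<alpha>)) L = 0" using BZ by blast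
      have "s \<noteq> 0"
      proof
        assume "s = 0"
        then have "Ccov X E 0 0 = 0" using C by simp
        then show False using Ccov_ge1[OF False, of X] by simp
      qed
      then have "s / (1 + \<alpha>) \<in> Z" unfolding Z_def using C s a1 by auto
      moreover have "s = (1 + \<alpha>) * (s / (1 + \<alpha>))" using a1 by simp
      ultimately show "ereal s \<in> ereal ` ((\<lambda>t. (1 + \<alpha>) * t) ` Z)" by blast
    next
      fix t assume t: "t \<in> Z"
      then have "(1 + \<alpha>) * t \<ge> 0" "(1 + \<alpha>) * t / (1 + \<alpha>) = t" using a1 unfolding Z_def by auto
      then show "\<exists>s. ereal ((1 + \<alpha>) * t) = ereal s \<and> 0 \<le> s \<and> bowenM X \<alpha> E s \<epsilon> = 0"
        using BZ t unfolding Z_def by auto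
    qed
    then have "bowen_crit X \<alpha> E \<epsilon> = Inf (ereal ` ((\<lambda>t. (1 + \<alpha>) * t) ` Z))"
      unfolding bowen_crit_def by simp
    also have "\<dots> = ereal (1 + \<alpha>) * Inf (ereal ` Z)" by (rule Inf_ereal_scale[OF a1])
    finally show ?thesis using dimZ by simp
  qed
qed

lemma Lim_at_right_eventually_const:
  assumes "\<And>x::real. 0 < x \<Longrightarrow> x < 1 \<Longrightarrow> f x = c"
  shows "Lim (at_right 0) f = c"
proof (rule tendsto_Lim[OF trivial_limit_at_right_real])
  have "eventually (\<lambda>x. f x = c) (at_right 0)"
    unfolding eventually_at_right_field using assms by (intro exI[of _ 1]) auto
  then show "(f \<longlongrightarrow> c) (at_right 0)" by (rule tendsto_eventually)
qed

lemma bowen_entropy_eq: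
  assumes "E \<subseteq> X" "\<alpha> \<ge> 0"
  shows "bowen_entropy X \<alpha> E = ereal (1 + \<alpha>) * hausdorff_dim E"
  unfolding bowen_entropy_def
  by (rule Lim_at_right_eventually_const) (use crit_eq[OF assms(1) _ _ assms(2)] in auto)

lemma part1:
  assumes "E \<subseteq> X" "\<alpha> \<ge> 0"
  shows "hausdorff_dim E = bowen_entropy X \<alpha> E / ereal (1 + \<alpha>)"
proof -
  have a1: "1 + \<alpha> > 0" using assms by simp
  show ?thesis unfolding bowen_entropy_eq[OF assms]
    using a1 by (cases "hausdorff_dim E") (auto simp: divide_ereal_def)
qed


definition pref :: "nat \<Rightarrow> seq \<Rightarrow> nat list" where
  "pref L x = map x [0..<L]"

lemma length_pref[simp]: "length (pref L x) = L"
  by (simp add: pref_def)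

lemma nth_pref[simp]: "j < L \<Longrightarrow> pref L x ! j = x j"
  by (simp add: pref_def)

lemma pref_eq_iff: "pref L x = pref L y \<longleftrightarrow> (\<forall>j<L. x j = y j)"
  by (auto simp: pref_def)

lemma pref_eq_cyl: "pref L x = pref L y \<longleftrightarrow> x \<in> cyl y L"
  by (auto simp: pref_eq_iff cyl_def)

lemma shift_in_SFT: "x \<in> SFT k A \<Longrightarrow> (\<lambda>j. x (n + j)) \<in> SFT k A"
  unfolding SFT_def full_shift_def by auto

lemma pref_split:
  assumes "m \<le> L" "x \<in> cyl c m"
  shows "pref L x = pref m c @ pref (L - m) (\<lambda>j. x (m + j))"
proof (rule nth_equalityI)
  show "length (pref L x) = length (pref m c @ pref (L - m) (\<lambda>j. x (m + j)))" using assms by simp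
  fix i assume "i < length (pref L x)"
  then have i: "i < L" by simp
  show "pref L x ! i = (pref m c @ pref (L - m) (\<lambda>j. x (m + j))) ! i"
    using assms i by (cases "i < m") (auto simp: nth_append cyl_def)
qed

lemma finite_pref: "finite (pref L ` SFT k A)"
proof (rule finite_subset)
  show "pref L ` SFT k A \<subseteq> {w. set w \<subseteq> {..<k} \<and> length w = L}"
    unfolding SFT_def full_shift_def pref_def by auto
  show "finite {w. set w \<subseteq> {..<k} \<and> length w = L}"
    by (rule finite_lists_length_eq) simp
qed

locale sft =
  fixes k :: nat and A :: "nat mat"
  assumes k1: "k \<ge> 1"
    and Acar: "A \<in> carrier_mat k k"
    and A01: "\<forall>i<k. \<forall>j<k. A $$ (i, j) \<in> {0, 1}"
    and Arow: "\<forall>i<k. \<exists>j<k. A $$ (i, j) = 1"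
begin

abbreviation "X \<equiv> SFT k A"

definition adm :: "nat list \<Rightarrow> bool" where
  "adm w = (set w \<subseteq> {..<k} \<and> (\<forall>i. Suc i < length w \<longrightarrow> A $$ (w ! i, w ! Suc i) = 1))"

definition succ :: "nat \<Rightarrow> nat" where
  "succ a = (SOME b. b < k \<and> A $$ (a, b) = 1)"

lemma succ: "a < k \<Longrightarrow> succ a < k \<and> A $$ (a, succ a) = 1"
  unfolding succ_def by (rule someI_ex) (use Arow in auto)

lemma adm_mem: "adm w \<Longrightarrow> a \<in> set w \<Longrightarrow> a < k"
  unfolding adm_def by auto

lemma succ_pow: "a < k \<Longrightarrow> (succ ^^ n) a < k"
  by (induction n) (auto simp: succ)

definition ext :: "nat list \<Rightarrow> seq" where
  "ext w = (\<lambda>j. if j < length w then w ! j else (succ ^^ (j - (length w - 1))) (last w))"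

lemma ext_in:
  assumes "adm w" "w \<noteq> []"
  shows "ext w \<in> X" "pref (length w) (ext w) = w"
proof -
  let ?L = "length w"
  have "last w \<in> set w" using assms(2) by simp
  then have lw: "last w < k" using adm_mem[OF assms(1)] by blast
  have val: "ext w j < k" for j
  proof (cases "j < ?L")
    case True
    then have "w ! j \<in> set w" by simp
    then have "w ! j < k" using adm_mem[OF assms(1)] by blast
    then show ?thesis using True unfolding ext_def by simp
  next
    case False then show ?thesis unfolding ext_def using succ_pow[OF lw] by simp
  qed
  have tr: "A $$ (ext w j, ext w (Suc j)) = 1" for j
  proof -
    consider "Suc j < ?L" | "Suc j = ?L" | "Suc j > ?L" by linarith
    then show ?thesis
    proof cases
      case 1 then show ?thesis using assms unfolding ext_def adm_def by auto
    next
      case 2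
      then have j: "j = ?L - 1" by simp
      have "ext w j = last w" using assms 2 unfolding ext_def j by (simp add: last_conv_nth)
      moreover have "ext w (Suc j) = succ (last w)" using 2 unfolding ext_def by simp
      ultimately show ?thesis using succ[OF lw] by simp
    next
      case 3
      then have "Suc j - (?L - 1) = Suc (j - (?L - 1))" using assms by (cases w) auto
      then have "ext w (Suc j) = succ (ext w j)" using 3 unfolding ext_def by simp
      then show ?thesis using succ[OF val[of j]] by simp
    qed
  qed
  show "ext w \<in> X" unfolding SFT_def full_shift_def using val tr by auto
  show "pref (length w) (ext w) = w"
    by (rule nth_equalityI) (auto simp: ext_def)
qed

lemma X_nonempty: "X \<noteq> {}"
proof -
  have "adm [0]" unfolding adm_def using k1 by auto
  then show ?thesis using ext_in(1)[of "[0]"] by auto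
qed

lemma pref_image: "pref L ` X = {w. length w = L \<and> adm w}"
proof
  show "pref L ` X \<subseteq> {w. length w = L \<and> adm w}"
  proof safe
    fix x assume x: "x \<in> X"
    show "length (pref L x) = L" by simp
    have "set (pref L x) \<subseteq> {..<k}" using x unfolding SFT_def full_shift_def pref_def by auto
    moreover have "A $$ (pref L x ! i, pref L x ! Suc i) = 1" if "Suc i < length (pref L x)" for i
      using x that unfolding SFT_def by simp
    ultimately show "adm (pref L x)" unfolding adm_def by blast
  qed
  show "{w. length w = L \<and> adm w} \<subseteq> pref L ` X"
  proof safe
    fix w assume w: "adm w" "L = length w"
    show "w \<in> pref (length w) ` X"
    proof (cases "w = []")
      case True
      obtain x where "x \<in> X" using X_nonempty by auto
      then show ?thesis using True by (auto simp: pref_def intro!: image_eqI[of _ _ x])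
    next
      case False
      then show ?thesis using ext_in[OF w(1) False] by (auto intro!: image_eqI[of _ _ "ext w"])
    qed
  qed
qed

end


context sft
begin

lemma finite_adm: "finite {w. length w = L \<and> adm w}"
proof (rule finite_subset)
  show "{w. length w = L \<and> adm w} \<subseteq> {w. set w \<subseteq> {..<k} \<and> length w = L}"
    unfolding adm_def by auto
  show "finite {w. set w \<subseteq> {..<k} \<and> length w = L}"
    by (rule finite_lists_length_eq) simp
qed

lemma adm_snoc: "adm (u @ [j]) \<longleftrightarrow> adm u \<and> j < k \<and> (u \<noteq> [] \<longrightarrow> A $$ (last u, j) = 1)"
proof
  assume H: "adm (u @ [j])"
  have s: "set u \<subseteq> {..<k}" "j < k" using H unfolding adm_def by auto
  have t: "A $$ (u ! i, u ! Suc i) = 1" if "Suc i < length u" for i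
  proof -
    have "A $$ ((u @ [j]) ! i, (u @ [j]) ! Suc i) = 1" using H that unfolding adm_def by auto
    then show ?thesis using that by (simp add: nth_append)
  qed
  have l: "A $$ (last u, j) = 1" if "u \<noteq> []"
  proof -
    define i where "i = length u - 1"
    have i: "Suc i = length u" using that unfolding i_def by (cases u) auto
    have lt: "Suc i < length (u @ [j])" using i by simp
    have h1: "A $$ ((u @ [j]) ! i, (u @ [j]) ! Suc i) = 1" using H lt unfolding adm_def by blast
    have i2: "length u - Suc 0 = i" using i by simp
    have h2: "(u @ [j]) ! i = last u" using i that i2 by (simp add: nth_append last_conv_nth)
    have h3: "(u @ [j]) ! Suc i = j" using i by (simp add: nth_append)
    show ?thesis using h1 h2 h3 by simp
  qed
  show "adm u \<and> j < k \<and> (u \<noteq> [] \<longrightarrow> A $$ (last u, j) = 1)"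
    using s t l unfolding adm_def by auto
next
  assume H: "adm u \<and> j < k \<and> (u \<noteq> [] \<longrightarrow> A $$ (last u, j) = 1)"
  have "A $$ ((u @ [j]) ! i, (u @ [j]) ! Suc i) = 1" if "Suc i < length (u @ [j])" for i
  proof (cases "Suc i < length u")
    case True then show ?thesis using H unfolding adm_def by (simp add: nth_append)
  next
    case False
    then have i: "Suc i = length u" using that by simp
    then have "u \<noteq> []" by auto
    moreover have i2: "length u - Suc 0 = i" using i by simp
    moreover have "(u @ [j]) ! i = last u" using i \<open>u \<noteq> []\<close> i2 by (simp add: nth_append last_conv_nth)
    moreover have "(u @ [j]) ! Suc i = j" using i by (simp add: nth_append)
    ultimately show ?thesis using H by simp
  qed
  then show "adm (u @ [j])" using H unfolding adm_def by auto
qed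

definition paths :: "nat \<Rightarrow> nat \<Rightarrow> nat \<Rightarrow> nat list set" where
  "paths L i j = {w. length w = Suc L \<and> adm w \<and> hd w = i \<and> last w = j}"

lemma finite_paths: "finite (paths L i j)"
  by (rule finite_subset[OF _ finite_adm[of "Suc L"]]) (auto simp: paths_def)

lemma paths_0: "i < k \<Longrightarrow> paths 0 i j = (if i = j then {[i]} else {})"
  unfolding paths_def adm_def by (auto simp: length_Suc_conv)

lemma paths_Suc:
  assumes jk: "j < k"
  shows "paths (Suc L) i j = (\<Union>l\<in>{l. l < k \<and> A $$ (l, j) = 1}. (\<lambda>w. w @ [j]) ` paths L i l)"
proof safe
  fix w assume w: "w \<in> paths (Suc L) i j"
  define u where "u = butlast w"
  have wne: "w \<noteq> []" using w unfolding paths_def by auto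
  have wu: "w = u @ [j]" using w wne unfolding u_def paths_def by auto
  have lu: "length u = Suc L" using w unfolding u_def paths_def by auto
  then have une: "u \<noteq> []" by auto
  have "adm (u @ [j])" using w unfolding wu paths_def by simp
  then have au: "adm u" "j < k" "A $$ (last u, j) = 1" using une by (simp_all add: adm_snoc)
  have "last u < k" using adm_mem[OF au(1)] une by simp
  moreover have "u \<in> paths L i (last u)"
    using w une lu au unfolding paths_def wu by auto
  ultimately show "w \<in> (\<Union>l\<in>{l. l < k \<and> A $$ (l, j) = 1}. (\<lambda>w. w @ [j]) ` paths L i l)"
    using au(3) unfolding wu by auto
next
  fix l u assume l: "l < k" "A $$ (l, j) = 1" and u: "u \<in> paths L i l"
  have une: "u \<noteq> []" using u unfolding paths_def by auto
  show "u @ [j] \<in> paths (Suc L) i j"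
    using u une l jk by (auto simp: paths_def adm_snoc)
qed

lemma powA_Suc_entry:
  assumes "i < k" "j < k"
  shows "(A ^\<^sub>m Suc L) $$ (i, j) = (\<Sum>l<k. (A ^\<^sub>m L) $$ (i, l) * A $$ (l, j))"
  using assms Acar by (simp add: scalar_prod_def atLeast0LessThan)

lemma card_paths: "i < k \<Longrightarrow> j < k \<Longrightarrow> card (paths L i j) = (A ^\<^sub>m L) $$ (i, j)"
proof (induction L arbitrary: j)
  case 0
  then show ?case using Acar by (simp add: paths_0)
next
  case (Suc L)
  let ?S = "{l. l < k \<and> A $$ (l, j) = 1}"
  have "card (paths (Suc L) i j) = (\<Sum>l\<in>?S. card ((\<lambda>w. w @ [j]) ` paths L i l))"
    unfolding paths_Suc[OF Suc.prems(2)]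
    by (rule card_UN_disjoint) (simp, simp add: finite_paths, auto simp: paths_def)
  also have "\<dots> = (\<Sum>l\<in>?S. card (paths L i l))"
    by (intro sum.cong refl card_image) (auto simp: inj_on_def)
  also have "\<dots> = (\<Sum>l\<in>?S. (A ^\<^sub>m L) $$ (i, l))"
    using Suc by (intro sum.cong refl) auto
  also have "\<dots> = (\<Sum>l<k. (A ^\<^sub>m L) $$ (i, l) * A $$ (l, j))"
  proof -
    have "(\<Sum>l<k. (A ^\<^sub>m L) $$ (i, l) * A $$ (l, j)) = (\<Sum>l<k. if A $$ (l, j) = 1 then (A ^\<^sub>m L) $$ (i, l) else 0)"
    proof (intro sum.cong refl)
      fix l assume "l \<in> {..<k}"
      then have "A $$ (l, j) \<in> {0, 1}" using A01 Suc.prems by auto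
      then show "(A ^\<^sub>m L) $$ (i, l) * A $$ (l, j) = (if A $$ (l, j) = 1 then (A ^\<^sub>m L) $$ (i, l) else 0)"
        by auto
    qed
    also have "\<dots> = (\<Sum>l\<in>?S. (A ^\<^sub>m L) $$ (i, l))"
    proof -
      have e: "?S = {l \<in> {..<k}. A $$ (l, j) = 1}" by auto
      show ?thesis unfolding e by (rule sum.inter_filter[symmetric]) simp
    qed
    finally show ?thesis by simp
  qed
  also have "\<dots> = (A ^\<^sub>m Suc L) $$ (i, j)" using powA_Suc_entry Suc.prems by simp
  finally show ?case .
qed

definition rows :: "nat \<Rightarrow> nat \<Rightarrow> nat list set" where
  "rows L i = {w. length w = Suc L \<and> adm w \<and> hd w = i}"

lemma finite_rows: "finite (rows L i)"
  by (rule finite_subset[OF _ finite_adm[of "Suc L"]]) (auto simp: rows_def)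

lemma rows_eq: "rows L i = (\<Union>j<k. paths L i j)"
proof safe
  fix w assume w: "w \<in> rows L i"
  then have "w \<noteq> []" "adm w" unfolding rows_def by auto
  then have "last w < k" using adm_mem by simp
  then show "w \<in> (\<Union>j<k. paths L i j)" using w unfolding rows_def paths_def by auto
qed (auto simp: rows_def paths_def)

lemma card_rows: "i < k \<Longrightarrow> card (rows L i) = (\<Sum>j<k. (A ^\<^sub>m L) $$ (i, j))"
proof -
  assume i: "i < k"
  have "card (rows L i) = (\<Sum>j<k. card (paths L i j))"
    unfolding rows_eq by (rule card_UN_disjoint) (simp, simp add: finite_paths, auto simp: paths_def)
  also have "\<dots> = (\<Sum>j<k. (A ^\<^sub>m L) $$ (i, j))" using i card_paths by simp
  finally show ?thesis .
qed

lemma card_pref: "card (pref (Suc L) ` X) = (\<Sum>i<k. \<Sum>j<k. (A ^\<^sub>m L) $$ (i, j))"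
proof -
  have eq: "pref (Suc L) ` X = (\<Union>i<k. rows L i)"
  proof safe
    fix x assume "x \<in> X"
    then have w: "pref (Suc L) x \<in> {w. length w = Suc L \<and> adm w}" using pref_image by blast
    have "pref (Suc L) x \<noteq> []"
    proof
      assume "pref (Suc L) x = []"
      then have "length (pref (Suc L) x) = 0" by simp
      then show False by simp
    qed
    moreover have "adm (pref (Suc L) x)" using w by simp
    ultimately have "pref (Suc L) x \<noteq> []" "adm (pref (Suc L) x)" by auto
    then have "hd (pref (Suc L) x) < k" using adm_mem by simp
    then show "pref (Suc L) x \<in> (\<Union>i<k. rows L i)" using w unfolding rows_def by auto
  next
    fix i w assume "i < k" "w \<in> rows L i"
    then show "w \<in> pref (Suc L) ` X" using pref_image unfolding rows_def by auto
  qed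
  have "card (pref (Suc L) ` X) = (\<Sum>i<k. card (rows L i))"
    unfolding eq by (rule card_UN_disjoint) (simp, simp add: finite_rows, auto simp: rows_def)
  also have "\<dots> = (\<Sum>i<k. \<Sum>j<k. (A ^\<^sub>m L) $$ (i, j))" using card_rows by simp
  finally show ?thesis .
qed

lemma row_ge1: "i < k \<Longrightarrow> (\<Sum>j<k. (A ^\<^sub>m L) $$ (i, j)) \<ge> 1"
proof -
  assume i: "i < k"
  have adm1: "adm [i]" using i unfolding adm_def by auto
  let ?w = "pref (Suc L) (ext [i])"
  have "?w \<in> pref (Suc L) ` X" using ext_in(1)[OF adm1] by auto
  then have w1: "length ?w = Suc L" "adm ?w" using pref_image by auto
  have "?w \<noteq> []" by (simp add: pref_def)
  then have "hd ?w = ?w ! 0" by (rule hd_conv_nth)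
  also have "\<dots> = i" by (simp add: ext_def)
  finally have "?w \<in> rows L i" using w1 unfolding rows_def by auto
  moreover have "finite (rows L i)" by (rule finite_rows)
  ultimately have "card (rows L i) \<ge> 1" by (metis card_0_eq empty_iff less_one not_le)
  then show ?thesis using card_rows[OF i] by simp
qed

end


lemma smult_mult_vec: "v \<in> carrier_vec (dim_col M) \<Longrightarrow> (c \<cdot>\<^sub>m M) *\<^sub>v v = c \<cdot>\<^sub>v (M *\<^sub>v v)" for c :: "'a::comm_ring_1"
  by (rule eq_vecI) (auto simp: scalar_prod_def sum_distrib_left mult.assoc intro!: sum.cong)

lemma smult_pow:
  fixes c :: "'a::comm_ring_1"
  assumes "M \<in> carrier_mat n n"
  shows "(c \<cdot>\<^sub>m M) ^\<^sub>m L = (c ^ L) \<cdot>\<^sub>m (M ^\<^sub>m L)"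
proof (induction L)
  case 0 then show ?case using assms by (auto intro!: eq_matI)
next
  case (Suc L)
  have "(c \<cdot>\<^sub>m M) ^\<^sub>m Suc L = ((c ^ L) \<cdot>\<^sub>m (M ^\<^sub>m L)) * (c \<cdot>\<^sub>m M)" using Suc by simp
  also have "\<dots> = (c ^ L) \<cdot>\<^sub>m ((M ^\<^sub>m L) * (c \<cdot>\<^sub>m M))"
    using assms by (intro mult_smult_assoc_mat) auto
  also have "\<dots> = (c ^ L) \<cdot>\<^sub>m (c \<cdot>\<^sub>m ((M ^\<^sub>m L) * M))"
    using assms by (subst mult_smult_distrib) auto
  also have "\<dots> = (c ^ Suc L) \<cdot>\<^sub>m (M ^\<^sub>m Suc L)"
    by (rule eq_matI) (auto simp: mult.assoc)
  finally show ?case .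
qed

context sft
begin

definition Ac :: "complex mat" where "Ac = map_mat of_nat A"
definition r :: real where "r = spectral_radius Ac"

lemma Ac_car: "Ac \<in> carrier_mat k k"
  using Acar unfolding Ac_def by auto

lemma Ac_pow: "Ac ^\<^sub>m L = map_mat of_nat (A ^\<^sub>m L)"
proof (induction L)
  case 0 then show ?case using Acar by (auto simp: Ac_def intro!: eq_matI)
next
  case (Suc L)
  show ?case unfolding pow_mat.simps Suc.IH
    by (rule eq_matI) (use Acar in \<open>auto simp: Ac_def scalar_prod_def\<close>)
qed

lemma Ac_pow_entry: "i < k \<Longrightarrow> j < k \<Longrightarrow> (Ac ^\<^sub>m L) $$ (i, j) = of_nat ((A ^\<^sub>m L) $$ (i, j))"
  unfolding Ac_pow using Acar by simp

lemma k0: "k > 0" using k1 by simp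

lemma r_nonneg: "r \<ge> 0"
proof -
  have "r \<in> norm ` spectrum Ac" using spectral_radius_mem_max(1)[OF Ac_car k0] unfolding r_def .
  then show ?thesis by auto
qed

lemma sr_smult:
  assumes "s > 0"
  shows "spectral_radius (complex_of_real s \<cdot>\<^sub>m Ac) \<le> s * r"
proof -
  define c where "c = complex_of_real s"
  define B where "B = c \<cdot>\<^sub>m Ac"
  have Bc: "B \<in> carrier_mat k k" using Ac_car unfolding B_def by auto
  have c0: "c \<noteq> 0" using assms unfolding c_def by simp
  obtain \<mu> where mu: "\<mu> \<in> spectrum B" "spectral_radius B = norm \<mu>"
    using spectral_radius_mem_max(1)[OF Bc k0] by auto
  then obtain v where ev: "eigenvector B v \<mu>" unfolding spectrum_def eigenvalue_def by auto
  then have v: "v \<in> carrier_vec k" "v \<noteq> 0\<^sub>v k" "B *\<^sub>v v = \<mu> \<cdot>\<^sub>v v"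
    using Bc unfolding eigenvector_def by auto
  have "Ac *\<^sub>v v = (\<mu> / c) \<cdot>\<^sub>v v"
  proof (rule eq_vecI)
    fix i assume i: "i < dim_vec ((\<mu> / c) \<cdot>\<^sub>v v)"
    then have ik: "i < k" using v by simp
    have "(B *\<^sub>v v) $ i = c * (Ac *\<^sub>v v) $ i"
      unfolding B_def using smult_mult_vec[of v Ac c] v ik Ac_car by simp
    then have "c * (Ac *\<^sub>v v) $ i = \<mu> * v $ i" using v ik by simp
    then show "(Ac *\<^sub>v v) $ i = ((\<mu> / c) \<cdot>\<^sub>v v) $ i" using c0 ik v
      by (simp add: field_simps)
  qed (use v Ac_car in auto)
  then have "eigenvector Ac v (\<mu> / c)" using v Ac_car unfolding eigenvector_def by auto
  then have "\<mu> / c \<in> spectrum Ac" unfolding spectrum_def eigenvalue_def by auto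
  then have "norm (\<mu> / c) \<le> r"
    unfolding r_def by (intro spectral_radius_mem_max(2)[OF Ac_car k0]) auto
  then have "norm \<mu> \<le> s * r" using assms unfolding c_def by (simp add: norm_divide field_simps)
  then show ?thesis using mu unfolding B_def c_def by simp
qed

lemma scaled_pow_entry:
  assumes "s > 0" "i < k" "j < k"
  shows "norm (((complex_of_real s \<cdot>\<^sub>m Ac) ^\<^sub>m L) $$ (i, j)) = s ^ L * real ((A ^\<^sub>m L) $$ (i, j))"
proof -
  have "((complex_of_real s \<cdot>\<^sub>m Ac) ^\<^sub>m L) $$ (i, j) = complex_of_real s ^ L * of_nat ((A ^\<^sub>m L) $$ (i, j))"
    unfolding smult_pow[OF Ac_car] using assms Ac_car by (simp add: Ac_pow_entry)
  then show ?thesis using assms by (simp add: norm_mult norm_power)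
qed

lemma entry_bound_le1:
  assumes "s > 0" "s * r \<le> 1"
  shows "\<exists>c1 c2. \<forall>L i j. i < k \<longrightarrow> j < k \<longrightarrow> s ^ L * real ((A ^\<^sub>m L) $$ (i, j)) \<le> c1 + c2 * real L ^ (k - 1)"
proof -
  define B where "B = complex_of_real s \<cdot>\<^sub>m Ac"
  have Bc: "B \<in> carrier_mat k k" using Ac_car unfolding B_def by auto
  have "spectral_radius B \<le> 1" using sr_smult[OF assms(1)] assms(2) unfolding B_def by simp
  from spectral_radius_jnf_norm_bound_le_1_upper_triangular[OF Bc this]
  obtain c1 c2 where cb: "\<And>L. norm_bound (B ^\<^sub>m L) (c1 + c2 * real L ^ (k - 1))" by auto
  show ?thesis
  proof (intro exI allI impI)
    fix L i j assume ij: "i < k" "j < k"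
    have "norm ((B ^\<^sub>m L) $$ (i, j)) \<le> c1 + c2 * real L ^ (k - 1)"
      using cb[of L] ij Bc unfolding norm_bound_def by auto
    then show "s ^ L * real ((A ^\<^sub>m L) $$ (i, j)) \<le> c1 + c2 * real L ^ (k - 1)"
      using scaled_pow_entry[OF assms(1) ij] unfolding B_def by simp
  qed
qed

lemma entry_bound_less1:
  assumes "s > 0" "s * r < 1"
  shows "\<exists>c. \<forall>L i j. i < k \<longrightarrow> j < k \<longrightarrow> s ^ L * real ((A ^\<^sub>m L) $$ (i, j)) \<le> c"
proof -
  define B where "B = complex_of_real s \<cdot>\<^sub>m Ac"
  have Bc: "B \<in> carrier_mat k k" using Ac_car unfolding B_def by auto
  have "spectral_radius B < 1" using sr_smult[OF assms(1)] assms(2) unfolding B_def by simp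
  from spectral_radius_jnf_norm_bound_less_1_upper_triangular[OF Bc this]
  obtain c where cb: "\<And>L. norm_bound (B ^\<^sub>m L) c" by auto
  show ?thesis
  proof (intro exI allI impI)
    fix L i j assume ij: "i < k" "j < k"
    have "norm ((B ^\<^sub>m L) $$ (i, j)) \<le> c"
      using cb[of L] ij Bc unfolding norm_bound_def by auto
    then show "s ^ L * real ((A ^\<^sub>m L) $$ (i, j)) \<le> c"
      using scaled_pow_entry[OF assms(1) ij] unfolding B_def by simp
  qed
qed

lemma r_ge1: "r \<ge> 1"
proof (rule ccontr)
  assume "\<not> r \<ge> 1"
  then have r1: "r < 1" by simp
  define s where "s = 2 / (1 + r)"
  have s1: "s > 1" using r1 r_nonneg unfolding s_def by (simp add: field_simps)
  have sr: "s * r < 1" using r1 r_nonneg unfolding s_def by (simp add: field_simps)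
  obtain c where c: "\<And>L i j. i < k \<Longrightarrow> j < k \<Longrightarrow> s ^ L * real ((A ^\<^sub>m L) $$ (i, j)) \<le> c"
    using entry_bound_less1[OF _ sr] s1 by auto
  have "s ^ L \<le> real k * c" for L
  proof -
    have h: "(1::real) \<le> real (\<Sum>j<k. (A ^\<^sub>m L) $$ (0, j))"
      using row_ge1[OF k0, of L] by (metis of_nat_1 of_nat_le_iff)
    have "s ^ L * 1 \<le> s ^ L * real (\<Sum>j<k. (A ^\<^sub>m L) $$ (0, j))"
      using h s1 by (intro mult_left_mono) (auto simp del: of_nat_sum)
    also have "\<dots> = (\<Sum>j<k. s ^ L * real ((A ^\<^sub>m L) $$ (0, j)))"
      by (simp add: sum_distrib_left)
    also have "\<dots> \<le> (\<Sum>j<k. c)" using c k0 by (intro sum_mono) auto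
    finally show ?thesis by simp
  qed
  moreover obtain L where "real k * c < s ^ L" using real_arch_pow[OF s1] by auto
  ultimately show False by (meson not_le)
qed

lemma lower_bound: "r ^ L \<le> real (card (pref (Suc L) ` X))"
proof -
  obtain \<mu> where mu: "\<mu> \<in> spectrum Ac" "r = norm \<mu>"
    using spectral_radius_mem_max(1)[OF Ac_car k0] unfolding r_def by auto
  then obtain v where ev: "eigenvector Ac v \<mu>" unfolding spectrum_def eigenvalue_def by auto
  then have v: "v \<in> carrier_vec k" "v \<noteq> 0\<^sub>v k" using Ac_car unfolding eigenvector_def by auto
  have pw: "Ac ^\<^sub>m L *\<^sub>v v = \<mu> ^ L \<cdot>\<^sub>v v" by (rule eigenvector_pow[OF Ac_car ev])
  define m where "m = Max ((\<lambda>i. norm (v $ i)) ` {..<k})"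
  have "m \<in> (\<lambda>i. norm (v $ i)) ` {..<k}" unfolding m_def using k0 by (intro Max_in) auto
  then obtain i0 where i0: "i0 < k" "norm (v $ i0) = m" by auto
  have mge: "norm (v $ i) \<le> m" if "i < k" for i unfolding m_def using that by (intro Max_ge) auto
  have m0: "m > 0"
  proof (rule ccontr)
    assume "\<not> m > 0"
    then have "\<And>i. i < k \<Longrightarrow> v $ i = 0" using mge by (metis norm_le_zero_iff not_less order.trans)
    then have "v = 0\<^sub>v k" using v by (intro eq_vecI) auto
    then show False using v by simp
  qed
  define a where "a = (\<lambda>j. (A ^\<^sub>m L) $$ (i0, j))"
  have "(Ac ^\<^sub>m L *\<^sub>v v) $ i0 = (\<Sum>j<k. of_nat (a j) * v $ j)"
    using i0 Ac_car v by (simp add: scalar_prod_def Ac_pow_entry a_def atLeast0LessThan)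
  moreover have "(Ac ^\<^sub>m L *\<^sub>v v) $ i0 = \<mu> ^ L * v $ i0" using pw i0 v by simp
  ultimately have eq: "\<mu> ^ L * v $ i0 = (\<Sum>j<k. of_nat (a j) * v $ j)" by simp
  have "r ^ L * m = norm (\<mu> ^ L * v $ i0)" using mu i0 by (simp add: norm_mult norm_power)
  also have "\<dots> \<le> (\<Sum>j<k. real (a j) * norm (v $ j))"
    unfolding eq by (rule order.trans[OF norm_sum]) (simp add: norm_mult)
  also have "\<dots> \<le> (\<Sum>j<k. real (a j) * m)" using mge by (intro sum_mono mult_left_mono) auto
  also have "\<dots> = real (\<Sum>j<k. a j) * m" by (simp add: sum_distrib_right)
  finally have "r ^ L \<le> real (\<Sum>j<k. a j)" using m0 by simp
  also have "(\<Sum>j<k. a j) \<le> (\<Sum>i<k. \<Sum>j<k. (A ^\<^sub>m L) $$ (i, j))"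
    unfolding a_def using i0 by (intro member_le_sum) auto
  finally show ?thesis unfolding card_pref by simp
qed

lemma upper_bound: "\<exists>C. C \<ge> 0 \<and> (\<forall>L. real (card (pref (Suc L) ` X)) \<le> C * (1 + real L) ^ (k - 1) * r ^ L)"
proof -
  have r0: "r > 0" using r_ge1 by simp
  have "\<exists>c1 c2. \<forall>L i j. i < k \<longrightarrow> j < k \<longrightarrow> (1 / r) ^ L * real ((A ^\<^sub>m L) $$ (i, j)) \<le> c1 + c2 * real L ^ (k - 1)"
    using entry_bound_le1[of "1 / r"] r0 by simp
  then obtain c1 c2 where c0: "\<forall>L i j. i < k \<longrightarrow> j < k \<longrightarrow> (1 / r) ^ L * real ((A ^\<^sub>m L) $$ (i, j)) \<le> c1 + c2 * real L ^ (k - 1)"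
    by blast
  have c: "\<And>L i j. i < k \<Longrightarrow> j < k \<Longrightarrow> (1 / r) ^ L * real ((A ^\<^sub>m L) $$ (i, j)) \<le> c1 + c2 * real L ^ (k - 1)"
    using c0 by blast
  define C where "C = real k * real k * (\<bar>c1\<bar> + \<bar>c2\<bar>)"
  have ent: "real ((A ^\<^sub>m L) $$ (i, j)) \<le> (\<bar>c1\<bar> + \<bar>c2\<bar>) * (1 + real L) ^ (k - 1) * r ^ L"
    if "i < k" "j < k" for L i j
  proof -
    have p1: "1 \<le> (1 + real L) ^ (k - 1)" by simp
    have p2: "real L ^ (k - 1) \<le> (1 + real L) ^ (k - 1)" by (intro power_mono) auto
    have "c1 + c2 * real L ^ (k - 1) \<le> \<bar>c1\<bar> + \<bar>c2\<bar> * real L ^ (k - 1)"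
      by (smt (verit, best) abs_ge_self mult_right_mono zero_le_power of_nat_0_le_iff)
    also have "\<dots> \<le> \<bar>c1\<bar> * (1 + real L) ^ (k - 1) + \<bar>c2\<bar> * (1 + real L) ^ (k - 1)"
      using p1 p2 by (intro add_mono mult_left_mono) (auto simp: mult_le_cancel_left1)
    finally have b: "(1 / r) ^ L * real ((A ^\<^sub>m L) $$ (i, j)) \<le> (\<bar>c1\<bar> + \<bar>c2\<bar>) * (1 + real L) ^ (k - 1)"
      using c[OF that, of L] by (simp add: algebra_simps)
    have "real ((A ^\<^sub>m L) $$ (i, j)) = r ^ L * ((1 / r) ^ L * real ((A ^\<^sub>m L) $$ (i, j)))"
      using r0 by (simp add: power_one_over)
    also have "\<dots> \<le> r ^ L * ((\<bar>c1\<bar> + \<bar>c2\<bar>) * (1 + real L) ^ (k - 1))"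
      using b r0 by (intro mult_left_mono) auto
    finally show ?thesis by (simp add: mult_ac)
  qed
  show ?thesis
  proof (intro exI conjI allI)
    show "C \<ge> 0" unfolding C_def by simp
    fix L
    have "real (card (pref (Suc L) ` X)) = (\<Sum>i<k. \<Sum>j<k. real ((A ^\<^sub>m L) $$ (i, j)))"
      unfolding card_pref by simp
    also have "\<dots> \<le> (\<Sum>i<k. \<Sum>j<k. (\<bar>c1\<bar> + \<bar>c2\<bar>) * (1 + real L) ^ (k - 1) * r ^ L)"
      using ent by (intro sum_mono) auto
    also have "\<dots> = C * (1 + real L) ^ (k - 1) * r ^ L" unfolding C_def by simp
    finally show "real (card (pref (Suc L) ` X)) \<le> C * (1 + real L) ^ (k - 1) * r ^ L" .
  qed
qed

end


context sft
begin

lemma pref_Suc: "pref (Suc n) x = pref n x @ [x n]"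
  by (simp add: pref_def)

lemma finite_subcover:
  fixes I :: "nat set"
  assumes cov: "X \<subseteq> (\<Union>i\<in>I. cyl (c i) (m i))"
  shows "\<exists>N. X \<subseteq> (\<Union>i\<in>I \<inter> {..<N}. cyl (c i) (m i))"
proof (rule ccontr)
  assume H: "\<not> (\<exists>N. X \<subseteq> (\<Union>i\<in>I \<inter> {..<N}. cyl (c i) (m i)))"
  define bad where "bad u \<longleftrightarrow> (\<forall>N. \<exists>x\<in>X. pref (length u) x = u \<and> x \<notin> (\<Union>i\<in>I \<inter> {..<N}. cyl (c i) (m i)))" for u
  have bad0: "bad []" unfolding bad_def
  proof
    fix N
    from H obtain x where "x \<in> X" "x \<notin> (\<Union>i\<in>I \<inter> {..<N}. cyl (c i) (m i))" by blast
    then show "\<exists>x\<in>X. pref (length []) x = [] \<and> x \<notin> (\<Union>i\<in>I \<inter> {..<N}. cyl (c i) (m i))"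
      by (auto simp: pref_def)
  qed
  have step: "\<exists>a. a < k \<and> bad (u @ [a])" if bu: "bad u" for u
  proof (rule ccontr)
    assume nb: "\<not> (\<exists>a. a < k \<and> bad (u @ [a]))"
    have ex: "\<forall>a. \<exists>N. a < k \<longrightarrow> (\<forall>x\<in>X. pref (Suc (length u)) x = u @ [a] \<longrightarrow> x \<in> (\<Union>i\<in>I \<inter> {..<N}. cyl (c i) (m i)))"
      using nb unfolding bad_def by auto
    from choice[OF ex] obtain Nf where Nf0: "\<forall>a. a < k \<longrightarrow> (\<forall>x\<in>X. pref (Suc (length u)) x = u @ [a] \<longrightarrow> x \<in> (\<Union>i\<in>I \<inter> {..<Nf a}. cyl (c i) (m i)))"
      by blast
    have Nf: "\<And>a x. a < k \<Longrightarrow> x \<in> X \<Longrightarrow> pref (Suc (length u)) x = u @ [a] \<Longrightarrow> x \<in> (\<Union>i\<in>I \<inter> {..<Nf a}. cyl (c i) (m i))"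
      using Nf0 by blast
    define N where "N = (\<Sum>a<k. Nf a)"
    obtain x where x: "x \<in> X" "pref (length u) x = u" "x \<notin> (\<Union>i\<in>I \<inter> {..<N}. cyl (c i) (m i))"
      using bu unfolding bad_def by blast
    define a where "a = x (length u)"
    have ak: "a < k" using x(1) unfolding a_def SFT_def full_shift_def by auto
    have "pref (Suc (length u)) x = u @ [a]" unfolding pref_Suc x(2) a_def ..
    then have "x \<in> (\<Union>i\<in>I \<inter> {..<Nf a}. cyl (c i) (m i))" using Nf[OF ak x(1)] by blast
    moreover have "Nf a \<le> N" unfolding N_def using ak by (intro member_le_sum) auto
    ultimately have "x \<in> (\<Union>i\<in>I \<inter> {..<N}. cyl (c i) (m i))" by auto
    then show False using x(3) by blast
  qed
  define nxt where "nxt u = u @ [SOME a. a < k \<and> bad (u @ [a])]" for u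
  define w where "w n = (nxt ^^ n) []" for n
  have wS: "w (Suc n) = nxt (w n)" for n unfolding w_def by simp
  have wbad: "bad (w n) \<and> length (w n) = n" for n
  proof (induction n)
    case 0 then show ?case using bad0 unfolding w_def by simp
  next
    case (Suc n)
    have "bad (w n @ [SOME a. a < k \<and> bad (w n @ [a])])"
      using someI_ex[OF step[of "w n"]] Suc by blast
    then show ?case using Suc unfolding wS nxt_def by simp
  qed
  have wtake: "take m (w n) = w m" if "m \<le> n" for m n
    using that
  proof (induction n)
    case 0 then show ?case by (simp add: w_def)
  next
    case (Suc n)
    show ?case
    proof (cases "m = Suc n")
      case True then show ?thesis using wbad[of "Suc n"] by simp
    next
      case False
      then have "m \<le> n" using Suc.prems by simp
      then show ?thesis using Suc.IH wbad[of n] unfolding wS nxt_def by simp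
    qed
  qed
  define y where "y j = w (Suc j) ! j" for j
  have ypref: "pref n y = w n" for n
  proof (rule nth_equalityI)
    show "length (pref n y) = length (w n)" using wbad[of n] by simp
    fix j assume "j < length (pref n y)"
    then have j: "j < n" by simp
    have "w (Suc j) = take (Suc j) (w n)" using wtake[of "Suc j" n] j by simp
    then have "w (Suc j) ! j = w n ! j" using j by simp
    then show "pref n y ! j = w n ! j" using j unfolding y_def by simp
  qed
  have agree: "\<exists>x\<in>X. \<forall>j<n. x j = y j" for n
  proof -
    obtain x where x: "x \<in> X" "pref (length (w n)) x = w n" using wbad[of n] unfolding bad_def by blast
    have "pref n x = pref n y" using x(2) wbad[of n] ypref[of n] by simp
    then have "\<forall>j<n. x j = y j" unfolding pref_eq_iff .
    then show ?thesis using x(1) by blast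
  qed
  have yX: "y \<in> X"
  proof -
    have "y j < k \<and> A $$ (y j, y (Suc j)) = 1" for j
    proof -
      obtain x where x: "x \<in> X" "\<forall>i<Suc (Suc j). x i = y i" using agree[of "Suc (Suc j)"] by blast
      then have e: "x j = y j" "x (Suc j) = y (Suc j)" by auto
      have "x j < k" "A $$ (x j, x (Suc j)) = 1" using x(1) unfolding SFT_def full_shift_def by auto
      then show ?thesis using e by simp
    qed
    then show ?thesis unfolding SFT_def full_shift_def by auto
  qed
  then obtain i where i: "i \<in> I" "y \<in> cyl (c i) (m i)" using cov by blast
  obtain x where x: "x \<in> X" "pref (length (w (m i))) x = w (m i)"
    "x \<notin> (\<Union>i'\<in>I \<inter> {..<Suc i}. cyl (c i') (m i'))"
    using wbad[of "m i"] unfolding bad_def by blast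
  have "pref (m i) x = pref (m i) y" using x(2) wbad[of "m i"] ypref[of "m i"] by simp
  then have "x \<in> cyl (c i) (m i)" using i(2) unfolding pref_eq_iff cyl_def by auto
  then show False using x(3) i(1) by blast
qed

lemma kraft:
  assumes "finite J" "X \<subseteq> (\<Union>i\<in>J. cyl (c i) (m i))" "\<forall>i\<in>J. 1 \<le> m i \<and> m i \<le> M"
    "(\<Sum>i\<in>J. exp (- t * real (m i))) \<le> 1" "t \<ge> 0"
  shows "real (card (pref L ` X)) \<le> exp (t * (real M + real L))"
proof (induction L rule: less_induct)
  case (less L)
  define g where "g i = (if L \<le> m i then {pref L (c i)} else (\<lambda>u. pref (m i) (c i) @ u) ` pref (L - m i) ` X)" for i
  have sub: "pref L ` X \<subseteq> (\<Union>i\<in>J. g i)"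
  proof
    fix w assume "w \<in> pref L ` X"
    then obtain x where x: "x \<in> X" "w = pref L x" by auto
    then obtain i where i: "i \<in> J" "x \<in> cyl (c i) (m i)" using assms(2) by blast
    show "w \<in> (\<Union>i\<in>J. g i)"
    proof (cases "L \<le> m i")
      case True
      then have "pref L x = pref L (c i)" using i(2) unfolding pref_eq_iff cyl_def by auto
      then show ?thesis using i True x unfolding g_def by auto
    next
      case False
      have "pref L x = pref (m i) (c i) @ pref (L - m i) (\<lambda>j. x (m i + j))"
        using False i(2) by (intro pref_split) auto
      moreover have "(\<lambda>j. x (m i + j)) \<in> X" using x(1) by (rule shift_in_SFT)
      ultimately show ?thesis using i False x unfolding g_def by auto
    qed
  qed
  have fin: "finite (g i)" for i unfolding g_def using finite_pref by auto
  have "card (pref L ` X) \<le> card (\<Union>i\<in>J. g i)"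
    using sub fin assms(1) by (intro card_mono) auto
  also have "\<dots> \<le> (\<Sum>i\<in>J. card (g i))" by (rule card_UN_le[OF assms(1)])
  finally have c1: "real (card (pref L ` X)) \<le> (\<Sum>i\<in>J. real (card (g i)))"
    by (metis of_nat_le_iff of_nat_sum)
  have each: "real (card (g i)) \<le> exp (t * (real M + real L)) * exp (- t * real (m i))" if "i \<in> J" for i
  proof (cases "L \<le> m i")
    case True
    have "real (m i) \<le> real M" using assms(3) that by simp
    then have "real M + real L - real (m i) \<ge> 0" by linarith
    then have "0 \<le> t * (real M + real L - real (m i))" using assms(5) by simp
    then have "1 \<le> exp (t * (real M + real L - real (m i)))" by simp
    also have "\<dots> = exp (t * (real M + real L)) * exp (- t * real (m i))"
      by (simp add: exp_add[symmetric] algebra_simps)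
    finally show ?thesis using True unfolding g_def by simp
  next
    case False
    have "card (g i) \<le> card (pref (L - m i) ` X)"
      unfolding g_def using False by (simp add: card_image_le finite_pref)
    then have "real (card (g i)) \<le> real (card (pref (L - m i) ` X))" by simp
    also have "\<dots> \<le> exp (t * (real M + real (L - m i)))"
    proof -
      have "1 \<le> m i" using assms(3) that by simp
      then have "L - m i < L" using False by simp
      then show ?thesis by (rule less.IH)
    qed
    also have "real (L - m i) = real L - real (m i)" using False by simp
    also have "exp (t * (real M + (real L - real (m i)))) = exp (t * (real M + real L)) * exp (- t * real (m i))"
      by (simp add: exp_add[symmetric] algebra_simps)
    finally show ?thesis .
  qed
  have "(\<Sum>i\<in>J. real (card (g i))) \<le> (\<Sum>i\<in>J. exp (t * (real M + real L)) * exp (- t * real (m i)))"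
    using each by (rule sum_mono)
  also have "\<dots> = exp (t * (real M + real L)) * (\<Sum>i\<in>J. exp (- t * real (m i)))"
    by (simp add: sum_distrib_left)
  also have "\<dots> \<le> exp (t * (real M + real L)) * 1"
    using assms(4) by (intro mult_left_mono) auto
  finally show ?case using c1 by simp
qed

end


context sft
begin

lemma r_pos: "r > 0" using r_ge1 by simp
lemma lnr_nonneg: "ln r \<ge> 0" using r_ge1 by simp

lemma rpow_exp: "r ^ n = exp (real n * ln r)"
  using r_pos by (simp add: exp_of_nat_mult)

lemma Ccov_X_large:
  assumes "t > ln r"
  shows "Ccov X X t L = 0"
proof -
  obtain C where C: "C \<ge> 0" "\<And>n. real (card (pref (Suc n) ` X)) \<le> C * (1 + real n) ^ (k - 1) * r ^ n"
    using upper_bound by blast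
  define \<delta> where "\<delta> = t - ln r"
  have d0: "\<delta> > 0" using assms unfolding \<delta>_def by simp
  define g where "g n = C * (1 + real n) ^ (k - 1) * exp (- \<delta> * (1 + real n))" for n
  have glim: "g \<longlonglongrightarrow> 0" unfolding g_def using d0 by real_asymp
  have bound: "real (card (pref (Suc n) ` X)) * exp (- t * real (Suc n)) \<le> g n" for n
  proof -
    have "r ^ n * exp (- t * real (Suc n)) = exp (- \<delta> * (1 + real n) - ln r)"
      unfolding rpow_exp \<delta>_def by (simp add: exp_add[symmetric] algebra_simps)
    also have "\<dots> \<le> exp (- \<delta> * (1 + real n))" using lnr_nonneg by simp
    finally have e: "r ^ n * exp (- t * real (Suc n)) \<le> exp (- \<delta> * (1 + real n))" .
    have "real (card (pref (Suc n) ` X)) * exp (- t * real (Suc n))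
        \<le> C * (1 + real n) ^ (k - 1) * r ^ n * exp (- t * real (Suc n))"
      using C(2)[of n] by (intro mult_right_mono) auto
    also have "\<dots> = C * (1 + real n) ^ (k - 1) * (r ^ n * exp (- t * real (Suc n)))" by simp
    also have "\<dots> \<le> C * (1 + real n) ^ (k - 1) * exp (- \<delta> * (1 + real n))"
      using e C(1) by (intro mult_left_mono) auto
    finally show ?thesis unfolding g_def .
  qed
  show ?thesis unfolding Ccov_def INF_zero_iff
  proof (intro allI impI)
    fix e :: real assume e: "e > 0"
    have "eventually (\<lambda>n. g n < e) sequentially" using order_tendstoD(2)[OF glim] e by auto
    moreover have "eventually (\<lambda>n. L \<le> n) sequentially" by (rule eventually_ge_at_top)
    ultimately have "eventually (\<lambda>n. g n < e \<and> L \<le> n) sequentially" by (rule eventually_conj)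
    then obtain N where "\<forall>n\<ge>N. g n < e \<and> L \<le> n" unfolding eventually_sequentially by blast
    then have n: "g N < e" "L \<le> N" by auto
    define F where "F = pref (Suc N) ` X"
    have finF: "finite F" unfolding F_def by (rule finite_pref)
    obtain h where h: "bij_betw h {0..<card F} F" using ex_bij_betw_nat_finite[OF finF] by blast
    define rep where "rep w = (SOME x. x \<in> X \<and> pref (Suc N) x = w)" for w
    have rep: "rep w \<in> X \<and> pref (Suc N) (rep w) = w" if "w \<in> F" for w
      unfolding rep_def by (rule someI_ex[of "\<lambda>x. x \<in> X \<and> pref (Suc N) x = w"]) (use that F_def in auto)
    define p where "p = ({0..<card F}, \<lambda>i. rep (h i), \<lambda>i::nat. Suc N)"
    have pS: "p \<in> CovS X X L"
    proof -
      have "\<forall>i\<in>{0..<card F}. rep (h i) \<in> X \<and> L \<le> Suc N"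
        using rep h n(2) by (auto dest: bij_betwE)
      moreover have "X \<subseteq> (\<Union>i\<in>{0..<card F}. cyl (rep (h i)) (Suc N))"
      proof
        fix x assume x: "x \<in> X"
        then have pF: "pref (Suc N) x \<in> F" unfolding F_def by auto
        then obtain i where i: "i \<in> {0..<card F}" "h i = pref (Suc N) x"
          using h by (metis bij_betw_imp_surj_on imageE)
        then have "pref (Suc N) (rep (h i)) = pref (Suc N) x" using rep[OF pF] by simp
        then have "x \<in> cyl (rep (h i)) (Suc N)" unfolding pref_eq_cyl[symmetric] by simp
        then show "x \<in> (\<Union>i\<in>{0..<card F}. cyl (rep (h i)) (Suc N))" using i(1) by blast
      qed
      ultimately show ?thesis unfolding p_def CovS_def by auto
    qed
    have "cw t p = (\<Sum>i\<in>{0..<card F}. ennreal (exp (- t * real (Suc N))))"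
      unfolding p_def cw_def prod.case by (subst suminf_finite[of "{0..<card F}"]) auto
    also have "\<dots> = ennreal (real (card F) * exp (- t * real (Suc N)))"
      by (subst sum_ennreal) auto
    also have "\<dots> \<le> ennreal (g N)" using bound[of N] unfolding F_def by (intro ennreal_leI) simp
    also have "\<dots> < ennreal e" using n(1) e by (intro ennreal_lessI) auto
    finally show "\<exists>p\<in>CovS X X L. cw t p < ennreal e" using pS by blast
  qed
qed

lemma Ccov_X_small:
  assumes "0 \<le> t" "t < ln r"
  shows "1 \<le> Ccov X X t 0"
  unfolding Ccov_def
proof (rule INF_greatest)
  fix p assume p: "p \<in> CovS X X 0"
  obtain I c m where pe: "p = (I, c, m)" by (cases p) auto
  show "1 \<le> cw t p"
  proof (rule ccontr)
    assume "\<not> 1 \<le> cw t p"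
    then have lt: "cw t p < 1" by simp
    have cov: "X \<subseteq> (\<Union>i\<in>I. cyl (c i) (m i))" using p unfolding pe CovS_def by auto
    obtain N where N: "X \<subseteq> (\<Union>i\<in>I \<inter> {..<N}. cyl (c i) (m i))" using finite_subcover[OF cov] by blast
    define J where "J = I \<inter> {..<N}"
    have finJ: "finite J" unfolding J_def by simp
    define S where "S = (\<Sum>i\<in>J. exp (- t * real (m i)))"
    have "ennreal S = (\<Sum>i\<in>J. ennreal (exp (- t * real (m i))))"
      unfolding S_def by (subst sum_ennreal) auto
    also have "\<dots> = (\<Sum>i\<in>J. (if i \<in> I then ennreal (exp (- t * real (m i))) else 0))"
      unfolding J_def by (intro sum.cong) auto
    also have "\<dots> \<le> cw t p" unfolding pe cw_def prod.case
      by (rule sum_le_suminf[OF summableI finJ]) auto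
    finally have Sle: "ennreal S \<le> cw t p" .
    have Slt: "ennreal S < 1" using le_less_trans[OF Sle lt] .
    have S1: "S < 1"
    proof (rule ccontr)
      assume "\<not> S < 1"
      then have "ennreal 1 \<le> ennreal S" by (intro ennreal_leI) simp
      then show False using Slt by simp
    qed
    have m1: "\<forall>i\<in>J. 1 \<le> m i"
    proof
      fix i assume i: "i \<in> J"
      show "1 \<le> m i"
      proof (rule ccontr)
        assume "\<not> 1 \<le> m i"
        then have "m i = 0" by simp
        then have "1 \<le> S" unfolding S_def using member_le_sum[OF i, of "\<lambda>i. exp (- t * real (m i))"] finJ by simp
        then show False using S1 by simp
      qed
    qed
    define M where "M = (\<Sum>i\<in>J. m i)"
    have mM: "\<forall>i\<in>J. 1 \<le> m i \<and> m i \<le> M" using m1 finJ unfolding M_def by (auto intro!: member_le_sum)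
    have kr: "real (card (pref L' ` X)) \<le> exp (t * (real M + real L'))" for L'
      by (rule kraft[OF finJ N[folded J_def] mM]) (use S1 assms(1) S_def in auto)
    have ineq: "real L' * ln r \<le> t * (real M + real L' + 1)" for L'
    proof -
      have "r ^ L' \<le> exp (t * (real M + real (Suc L')))" using lower_bound[of L'] kr[of "Suc L'"] by simp
      then have "exp (real L' * ln r) \<le> exp (t * (real M + real L' + 1))" unfolding rpow_exp by (simp add: algebra_simps)
      then show ?thesis by simp
    qed
    define L' where "L' = nat \<lceil>t * (real M + 1) / (ln r - t)\<rceil> + 1"
    have pos: "ln r - t > 0" using assms by simp
    have "t * (real M + 1) / (ln r - t) < real L'" unfolding L'_def by linarith
    then have "t * (real M + 1) < real L' * (ln r - t)" using pos by (simp add: divide_less_eq)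
    then show False using ineq[of L'] by (simp add: algebra_simps)
  qed
qed

lemma dim_X: "hausdorff_dim X = ereal (ln r)"
proof -
  define Z where "Z = {t. 0 < t \<and> (\<forall>L. Ccov X X t L = 0)}"
  have "{ereal s |s. 0 < s \<and> hausdorff_measure s X = 0} = ereal ` Z"
    unfolding Z_def using hausdorff_zero_iff[of X X] by auto
  then have dimZ: "hausdorff_dim X = Inf (ereal ` Z)" unfolding hausdorff_dim_def by simp
  have Zup: "t \<in> Z" if "t > ln r" for t
    using that lnr_nonneg Ccov_X_large unfolding Z_def by auto
  have Zlow: "ln r \<le> t" if "t \<in> Z" for t
  proof (rule ccontr)
    assume "\<not> ln r \<le> t"
    then have "1 \<le> Ccov X X t 0" using that unfolding Z_def by (intro Ccov_X_small) auto
    then show False using that unfolding Z_def by simp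
  qed
  have "Inf (ereal ` Z) = ereal (ln r)"
  proof (rule antisym)
    show "Inf (ereal ` Z) \<le> ereal (ln r)"
    proof (rule ereal_le_epsilon2)
      fix e :: real assume e: "e > 0"
      have "Inf (ereal ` Z) \<le> ereal (ln r + e)" using Zup[of "ln r + e"] e by (intro Inf_lower) auto
      then show "Inf (ereal ` Z) \<le> ereal (ln r) + ereal e" by simp
    qed
    show "ereal (ln r) \<le> Inf (ereal ` Z)" by (rule Inf_greatest) (auto dest: Zlow)
  qed
  then show ?thesis using dimZ by simp
qed

end


context sft
begin

lemma span_num_eq:
  assumes "0 < \<epsilon>" "\<epsilon> \<le> 1" "\<alpha> \<ge> 0"
  shows "span_num X \<alpha> n \<epsilon> = card (pref (ell \<alpha> \<epsilon> n) ` X)"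
proof -
  define l where "l = ell \<alpha> \<epsilon> n"
  have sp: "spanning X \<alpha> n \<epsilon> E \<longleftrightarrow> E \<subseteq> X \<and> (\<forall>x\<in>X. \<exists>y\<in>E. pref l y = pref l x)" for E
    unfolding spanning_def bowen_dist_less_iff[OF assms] pref_eq_iff l_def by (auto simp: eq_commute)
  have lower: "card (pref l ` X) \<le> card E" if "finite E" "spanning X \<alpha> n \<epsilon> E" for E
  proof -
    have H: "\<forall>x\<in>X. \<exists>y\<in>E. pref l y = pref l x" using that(2) unfolding sp by blast
    have "pref l ` X \<subseteq> pref l ` E"
    proof
      fix w assume "w \<in> pref l ` X"
      then obtain x where x: "x \<in> X" "w = pref l x" by auto
      then obtain y where y: "y \<in> E" "pref l y = pref l x" using H by blast
      then show "w \<in> pref l ` E" using x(2) by (auto intro: image_eqI[of _ _ y])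
    qed
    then have "card (pref l ` X) \<le> card (pref l ` E)" using that(1) by (intro card_mono) auto
    also have "\<dots> \<le> card E" using that(1) by (rule card_image_le)
    finally show ?thesis .
  qed
  define rep where "rep w = (SOME x. x \<in> X \<and> pref l x = w)" for w
  have rep: "rep w \<in> X \<and> pref l (rep w) = w" if "w \<in> pref l ` X" for w
    unfolding rep_def by (rule someI_ex[of "\<lambda>x. x \<in> X \<and> pref l x = w"]) (use that in auto)
  define E0 where "E0 = rep ` (pref l ` X)"
  have finE0: "finite E0" unfolding E0_def using finite_pref by simp
  have spE0: "spanning X \<alpha> n \<epsilon> E0"
    unfolding sp
  proof
    show "E0 \<subseteq> X" unfolding E0_def using rep by auto
    show "\<forall>x\<in>X. \<exists>y\<in>E0. pref l y = pref l x"
    proof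
      fix x assume x: "x \<in> X"
      then have "pref l x \<in> pref l ` X" by simp
      then show "\<exists>y\<in>E0. pref l y = pref l x" using rep unfolding E0_def by blast
    qed
  qed
  have "card E0 \<le> card (pref l ` X)" unfolding E0_def using finite_pref by (rule card_image_le)
  then have cE0: "card E0 = card (pref l ` X)" using lower[OF finE0 spE0] by simp
  have "span_num X \<alpha> n \<epsilon> = card (pref l ` X)"
    unfolding span_num_def
  proof (rule cInf_eq_minimum)
    show "card (pref l ` X) \<in> {card E |E. finite E \<and> spanning X \<alpha> n \<epsilon> E}"
      using finE0 spE0 cE0 by force
    fix x assume "x \<in> {card E |E. finite E \<and> spanning X \<alpha> n \<epsilon> E}"
    then show "card (pref l ` X) \<le> x" using lower by auto
  qed
  then show ?thesis unfolding l_def .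
qed

lemma entropy_limit:
  assumes "0 < \<epsilon>" "\<epsilon> \<le> 1" "\<alpha> \<ge> 0"
  shows "(\<lambda>n. ln (real (card (pref (ell \<alpha> \<epsilon> n) ` X))) / real n) \<longlonglongrightarrow> (1 + \<alpha>) * ln r"
proof -
  define a where "a = 1 + \<alpha>"
  define b where "b = - ln \<epsilon> - \<alpha>"
  define q where "q = ln r"
  have a0: "a > 0" using assms unfolding a_def by simp
  have q0: "q \<ge> 0" unfolding q_def using lnr_nonneg .
  obtain C where C: "C \<ge> 0" "\<And>n. real (card (pref (Suc n) ` X)) \<le> C * (1 + real n) ^ (k - 1) * r ^ n"
    using upper_bound by blast
  define d where "d = real (k - 1)"
  define f where "f n = ln (real (card (pref (ell \<alpha> \<epsilon> n) ` X))) / real n" for n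
  define lo where "lo n = (a * real n + b - 2) * q / real n" for n
  define up where "up n = (ln C + d * ln (a * real n + b) + (a * real n + b - 1) * q) / real n" for n
  have bnds: "lo n \<le> f n \<and> f n \<le> up n" if n1: "n \<ge> 1" for n
  proof -
    define l where "l = ell \<alpha> \<epsilon> n"
    have lb: "real l \<le> a * real n + b" "real l > a * real n + b - 1"
      using ell_bounds[OF n1 assms] unfolding l_def a_def b_def by auto
    have ln1: "l \<ge> 1" using ell_ge[of n \<alpha> \<epsilon>] n1 unfolding l_def by simp
    then have lS: "l = Suc (l - 1)" by simp
    define P where "P = real (card (pref l ` X))"
    have Plow: "r ^ (l - 1) \<le> P" unfolding P_def using lower_bound[of "l - 1"] lS by simp
    have rp: "r ^ (l - 1) > 0" using r_pos by simp
    have P0: "P > 0" using Plow rp by linarith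
    have Pup: "P \<le> C * real l ^ (k - 1) * r ^ (l - 1)"
      unfolding P_def using C(2)[of "l - 1"] lS ln1 by (simp add: of_nat_diff)
    have C0: "C > 0"
    proof (rule ccontr)
      assume "\<not> C > 0" then have "C = 0" using C(1) by simp
      then show False using Pup P0 by simp
    qed
    have nn: "real n > 0" using n1 by simp
    have "real (l - 1) * q \<le> ln P"
    proof -
      have "ln (r ^ (l - 1)) \<le> ln P" using Plow rp by (subst ln_le_cancel_iff) auto
      then show ?thesis unfolding q_def using r_pos by (simp add: ln_realpow)
    qed
    moreover have "(a * real n + b - 2) * q \<le> real (l - 1) * q"
      using lb(2) ln1 q0 by (intro mult_right_mono) (auto simp: of_nat_diff)
    ultimately have lo1: "(a * real n + b - 2) * q \<le> ln P" by linarith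
    have "ln P \<le> ln (C * real l ^ (k - 1) * r ^ (l - 1))"
      using Pup P0 by (subst ln_le_cancel_iff) auto
    also have "\<dots> = ln C + d * ln (real l) + real (l - 1) * q"
      using C0 ln1 r_pos unfolding d_def q_def by (simp add: ln_mult ln_realpow)
    also have "\<dots> \<le> ln C + d * ln (a * real n + b) + (a * real n + b - 1) * q"
    proof -
      have "ln (real l) \<le> ln (a * real n + b)" using lb(1) ln1 by (subst ln_le_cancel_iff) auto
      then have "d * ln (real l) \<le> d * ln (a * real n + b)" unfolding d_def by (intro mult_left_mono) auto
      moreover have "real (l - 1) * q \<le> (a * real n + b - 1) * q"
        using lb(1) ln1 q0 by (intro mult_right_mono) (auto simp: of_nat_diff)
      ultimately show ?thesis by linarith
    qed
    finally have up1: "ln P \<le> ln C + d * ln (a * real n + b) + (a * real n + b - 1) * q" .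
    show ?thesis
      unfolding lo_def up_def f_def l_def[symmetric] P_def[symmetric]
      using lo1 up1 nn by (auto simp: divide_right_mono)
  qed
  have "lo \<longlonglongrightarrow> a * q" unfolding lo_def using a0 by real_asymp
  moreover have "up \<longlonglongrightarrow> a * q" unfolding up_def using a0 by real_asymp
  moreover have "eventually (\<lambda>n. lo n \<le> f n) sequentially"
    using bnds by (intro eventually_sequentiallyI[of 1]) auto
  moreover have "eventually (\<lambda>n. f n \<le> up n) sequentially"
    using bnds by (intro eventually_sequentiallyI[of 1]) auto
  ultimately have "f \<longlonglongrightarrow> a * q" by (intro tendsto_sandwich[of lo f sequentially up]) auto
  then show ?thesis unfolding f_def a_def q_def .
qed

lemma alpha_entropy_eq:
  assumes "\<alpha> \<ge> 0"
  shows "alpha_entropy X \<alpha> = ereal ((1 + \<alpha>) * ln r)"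
  unfolding alpha_entropy_def
proof (rule Lim_at_right_eventually_const)
  fix \<epsilon> :: real assume e: "0 < \<epsilon>" "\<epsilon> < 1"
  have "(\<lambda>n. ereal (ln (real (span_num X \<alpha> n \<epsilon>)) / real n)) =
        (\<lambda>n. ereal (ln (real (card (pref (ell \<alpha> \<epsilon> n) ` X))) / real n))"
    using span_num_eq[of \<epsilon> \<alpha>] e assms by simp
  moreover have "(\<lambda>n. ereal (ln (real (card (pref (ell \<alpha> \<epsilon> n) ` X))) / real n)) \<longlonglongrightarrow> ereal ((1 + \<alpha>) * ln r)"
    using entropy_limit[of \<epsilon> \<alpha>] e assms by (intro tendsto_ereal) auto
  ultimately show "limsup (\<lambda>n. ereal (ln (real (span_num X \<alpha> n \<epsilon>)) / real n)) = ereal ((1 + \<alpha>) * ln r)"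
    by (simp add: lim_imp_Limsup)
qed

end

theorem theorem1p4:
  fixes k :: nat and A :: "nat mat" and \<alpha> :: real
  assumes "k \<ge> 1"
    and "A \<in> carrier_mat k k"
    and "\<forall>i<k. \<forall>j<k. A $$ (i, j) \<in> {0, 1}"
    and "\<forall>i<k. \<exists>j<k. A $$ (i, j) = 1"
    and "\<alpha> \<ge> 0"
  shows "(\<forall>E. E \<subseteq> SFT k A \<longrightarrow>
            hausdorff_dim E = bowen_entropy (SFT k A) \<alpha> E / ereal (1 + \<alpha>))
       \<and> bowen_entropy (SFT k A) \<alpha> (SFT k A) = alpha_entropy (SFT k A) \<alpha>
       \<and> alpha_entropy (SFT k A) \<alpha> =
            ereal ((1 + \<alpha>) * ln (spectral_radius (map_mat of_nat A)))
       \<and> hausdorff_dim (SFT k A) = ereal (ln (spectral_radius (map_mat of_nat A)))"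
proof -
  interpret sft k A using assms(1-4) by unfold_locales
  have rr: "spectral_radius (map_mat of_nat A) = r" unfolding r_def Ac_def ..
  have p1: "\<forall>E. E \<subseteq> SFT k A \<longrightarrow> hausdorff_dim E = bowen_entropy (SFT k A) \<alpha> E / ereal (1 + \<alpha>)"
    using part1 assms(5) by blast
  have ae: "alpha_entropy (SFT k A) \<alpha> = ereal ((1 + \<alpha>) * ln r)" by (rule alpha_entropy_eq[OF assms(5)])
  have be: "bowen_entropy (SFT k A) \<alpha> (SFT k A) = ereal ((1 + \<alpha>) * ln r)"
    using bowen_entropy_eq[OF subset_refl assms(5)] dim_X by simp
  show ?thesis using p1 ae be dim_X unfolding rr by simp
qed


end
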